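(* Consider the two-stage algorithm for SSP that runs the partitioning algorithm IPR with parameter $\rho = 4$ in the partitioning stage and a polynomial-time approximation scheme (PTAS) for makespan minimization on related machines in the scheduling stage. For any constant $\epsilon \in (0,1)$ and any $\alpha \in (0,1)$, with the accuracy parameters of IPR and of the PTAS chosen appropriately as functions of $\epsilon$, this algorithm achieves a $$\min\{\eta^2(1+\epsilon)(1+\alpha),\ (1+\epsilon)(2 + 2/\alpha)\}$$ approximation for SSP, where $\eta = \max_{i \in [m]} \frac{\max\{\hat{s}_i, s_i\}}{\min\{\hat{s}_i, s_i\}}$ is the prediction error. That is, for every instance $(\mathbf p,\hat{\mathbf s},\mathbf s)$ with prediction error at most $\eta$, the makespan of the algorithm is at most this quantity times $opt(\mathbf p,\mathbf s)$.
   Context: Scheduling with Speed Predictions (SSP). An instance consists of $n$ jobs with processing times $p_1,\dots,p_n\ge 0$ and $m$ machines with true speeds $s_1,\dots,s_m>0$; processing job $j$ on machine $i$ takes time $p_j/s_i$. For a set $B$ of jobs (a "bag") let $p(B)=\sum_{j\in B}p_j$. In the partitioning stage the algorithm receives $\mathbf p$ and predicted speeds $\hat{\mathbf s}=(\hat s_1,\dots,\hat s_m)\ge 0$ (but not $\mathbf s$) and must partition $[n]$ into $m$ pairwise disjoint, possibly empty bags $B_1,\dots,B_m$. In the scheduling stage the true speeds $\mathbf s$ are revealed and each bag must be assigned as a whole to a machine; if $\mathcal M_i$ is the set of bags assigned to machine $i$, the makespan is $\max_i \sum_{B\in\mathcal M_i}p(B)/s_i$. $opt(\mathbf p,\mathbf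 s)$ is the minimum makespan of assigning the individual jobs to machines with speeds $\mathbf s$ (full information). Before computing $\eta$, $\mathbf s$ and $\hat{\mathbf s}$ are scaled so that $\max_i s_i=\max_i\hat s_i$. Algorithm IPR (Iterative-Partial-Rebalancing). Input: predicted speeds $\hat s_1\ge\dots\ge\hat s_m$, processing times $\mathbf p$, consistency parameter $\alpha$, accuracy $\epsilon\in(0,1)$, ratio parameter $\rho\ge1$. (1) Compute a partition $B_1,\dots,B_m$ with $p(B_1)\ge\dots\ge p(B_m)$ such that putting $B_i$ on machine $i$ has makespan at most $(1+\epsilon)opt(\mathbf p,\hat{\mathbf s})$ under speeds $\hat{\mathbf s}$ (via a PTAS). (2) Set $\overline{OPT}_C=\max_i p(B_i)/\hat s_i$ and the tentative assignment $\mathcal M_i=\{B_i\}$. (3) While $\max\{p(B): B\in\cup_i\mathcal M_i, |B|\ge 2\} > \rho\min\{p(B):B\in\cup_i\mathcal M_i\}$: compute $\mathcal M'=$ LPT-Rebalance$(\mathcal M)$; if $\max_i\sum_{B\in\mathcal M'_i}p(B)/\hat s_i>(1+\alpha)\overline{OPT}_C$, return the current bags $\cup_i\mathcal M_i$; otherwise set $\mathcal M\leftarrow\mathcal M'$. (4) When the loop ends, return the bags $\cup_i\mathcal M_i$. LPT-Rebalance$(\mathcal M_1,\dots,\mathcal M_m)$: let $B_{\min}$ be a bag of minimum $p(B)$ over all bags and $\mathcal M_{\min}$ the collection containing it; let $\mathcal M_{\max}$ be a collection containing a bag of maximum $p(B)$ among all bags with at least two jobs. Move $B_{\min}$ from $\mathcal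 M_{\min}$ into $\mathcal M_{\max}$; let $\ell=|\mathcal M_{\max}|$; pool all jobs of the bags in $\mathcal M_{\max}$ and redistribute them into $\ell$ new bags by LPT (consider jobs in non-increasing order of processing time and put each into a currently least-loaded bag); $\mathcal M_{\max}$ becomes these $\ell$ bags; other collections unchanged. *)

theory Defs
  imports Complex_Main
begin

text \<open>Jobs are 0..<n with processing times p; machines are 0..<m with speeds.
  An assignment f maps each job to a machine.\<close>

definition bagp :: "(nat \<Rightarrow> real) \<Rightarrow> nat set \<Rightarrow> real" where
  "bagp p B = (\<Sum>j\<in>B. p j)"

definition load :: "(nat \<Rightarrow> real) \<Rightarrow> nat \<Rightarrow> (nat \<Rightarrow> nat) \<Rightarrow> nat \<Rightarrow> real" where
  "load q n f i = sum q {j. j < n \<and> f j = i}"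

text \<open>Makespan at most T: load of machine i is at most T times its speed
  (this formulation is also correct for zero speeds).\<close>
definition feasible_within ::
  "(nat \<Rightarrow> real) \<Rightarrow> (nat \<Rightarrow> real) \<Rightarrow> nat \<Rightarrow> nat \<Rightarrow> (nat \<Rightarrow> nat) \<Rightarrow> real \<Rightarrow> bool" where
  "feasible_within q s n m f T \<longleftrightarrow>
     (\<forall>j<n. f j < m) \<and> (\<forall>i<m. load q n f i \<le> T * s i)"

definition opt :: "(nat \<Rightarrow> real) \<Rightarrow> (nat \<Rightarrow> real) \<Rightarrow> nat \<Rightarrow> nat \<Rightarrow> real" where
  "opt q s n m = Inf {T. T \<ge> 0 \<and> (\<exists>f. feasible_within q s n m f T)}"

text \<open>Makespan of an assignment under (positive) speeds s.\<close>
definition makespan :: "(nat \<Rightarrow> real) \<Rightarrow> (nat \<Rightarrow> real) \<Rightarrow> nat \<Rightarrow> nat \<Rightarrow> (nat \<Rightarrow> nat) \<Rightarrow> real" where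
  "makespan q s n m f = Max ((\<lambda>i. load q n f i / s i) ` {..<m})"

text \<open>Step (1): any partition that a PTAS with accuracy \<delta> may return.\<close>
definition ptas_partition ::
  "nat \<Rightarrow> nat \<Rightarrow> (nat \<Rightarrow> real) \<Rightarrow> (nat \<Rightarrow> real) \<Rightarrow> real \<Rightarrow> (nat \<Rightarrow> nat set) \<Rightarrow> bool" where
  "ptas_partition n m p shat \<delta> B \<longleftrightarrow>
     (\<forall>i<m. \<forall>i'<m. i \<noteq> i' \<longrightarrow> B i \<inter> B i' = {}) \<and>
     (\<Union>i<m. B i) = {..<n} \<and>
     (\<forall>i j. i \<le> j \<longrightarrow> j < m \<longrightarrow> bagp p (B j) \<le> bagp p (B i)) \<and>
     (\<forall>i<m. bagp p (B i) \<le> (1 + \<delta>) * opt p shat n m * shat i)"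

definition optC :: "nat \<Rightarrow> (nat \<Rightarrow> real) \<Rightarrow> (nat \<Rightarrow> real) \<Rightarrow> (nat \<Rightarrow> nat set) \<Rightarrow> real" where
  "optC m p shat B = Max ((\<lambda>i. bagp p (B i) / shat i) ` {..<m})"

text \<open>A tentative assignment: M i is the list of bags on machine i (i < m).\<close>
definition allbags :: "nat \<Rightarrow> (nat \<Rightarrow> nat set list) \<Rightarrow> nat set list" where
  "allbags m M = concat (map M [0..<m])"

definition continue_cond :: "(nat \<Rightarrow> real) \<Rightarrow> real \<Rightarrow> nat \<Rightarrow> (nat \<Rightarrow> nat set list) \<Rightarrow> bool" where
  "continue_cond p \<rho> m M \<longleftrightarrow>
     (\<exists>b\<in>set (allbags m M). card b \<ge> 2 \<and>
        bagp p b > \<rho> * Min (bagp p ` set (allbags m M)))"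

text \<open>LPT: jobs in the given order, each put into a currently least-loaded bag
  (ties broken arbitrarily).\<close>
inductive lpt_run :: "(nat \<Rightarrow> real) \<Rightarrow> nat list \<Rightarrow> nat set list \<Rightarrow> nat set list \<Rightarrow> bool"
  for p where
  lpt_nil: "lpt_run p [] bs bs"
| lpt_cons: "k < length bs \<Longrightarrow> (\<forall>k'<length bs. bagp p (bs ! k) \<le> bagp p (bs ! k')) \<Longrightarrow>
     lpt_run p js (bs[k := insert j (bs ! k)]) res \<Longrightarrow> lpt_run p (j # js) bs res"

definition lpt :: "(nat \<Rightarrow> real) \<Rightarrow> nat set \<Rightarrow> nat \<Rightarrow> nat set list \<Rightarrow> bool" where
  "lpt p J l res \<longleftrightarrow>
     (\<exists>js. distinct js \<and> set js = J \<and> sorted_wrt (\<lambda>a b. p b \<le> p a) js \<and>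
           lpt_run p js (replicate l {}) res)"

definition lpt_rebalance ::
  "(nat \<Rightarrow> real) \<Rightarrow> nat \<Rightarrow> (nat \<Rightarrow> nat set list) \<Rightarrow> (nat \<Rightarrow> nat set list) \<Rightarrow> bool" where
  "lpt_rebalance p m M M' \<longleftrightarrow>
     (\<exists>imin kmin imax kmax.
        imin < m \<and> kmin < length (M imin) \<and>
        (\<forall>b\<in>set (allbags m M). bagp p (M imin ! kmin) \<le> bagp p b) \<and>
        imax < m \<and> kmax < length (M imax) \<and> card (M imax ! kmax) \<ge> 2 \<and>
        (\<forall>b\<in>set (allbags m M). card b \<ge> 2 \<longrightarrow> bagp p b \<le> bagp p (M imax ! kmax)) \<and>
        (let M1 = M(imin := take kmin (M imin) @ drop (Suc kmin) (M imin));
             C = M1 imax @ [M imin ! kmin]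
         in \<exists>res. lpt p (\<Union>(set C)) (length C) res \<and> M' = M1(imax := res)))"

definition fits :: "(nat \<Rightarrow> real) \<Rightarrow> (nat \<Rightarrow> real) \<Rightarrow> nat \<Rightarrow> real \<Rightarrow> (nat \<Rightarrow> nat set list) \<Rightarrow> bool" where
  "fits p shat m T M \<longleftrightarrow> (\<forall>i<m. sum_list (map (bagp p) (M i)) \<le> T * shat i)"

text \<open>The while loop of IPR (step 3/4); T = (1+\<alpha>) OPT_C. Relates a state to a
  possible final state.\<close>
inductive ipr_loop ::
  "(nat \<Rightarrow> real) \<Rightarrow> (nat \<Rightarrow> real) \<Rightarrow> nat \<Rightarrow> real \<Rightarrow> real \<Rightarrow>
   (nat \<Rightarrow> nat set list) \<Rightarrow> (nat \<Rightarrow> nat set list) \<Rightarrow> bool"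
  for p shat m \<rho> T where
  loop_stop: "\<not> continue_cond p \<rho> m M \<Longrightarrow> ipr_loop p shat m \<rho> T M M"
| loop_reject: "continue_cond p \<rho> m M \<Longrightarrow> lpt_rebalance p m M M' \<Longrightarrow>
     \<not> fits p shat m T M' \<Longrightarrow> ipr_loop p shat m \<rho> T M M"
| loop_accept: "continue_cond p \<rho> m M \<Longrightarrow> lpt_rebalance p m M M' \<Longrightarrow>
     fits p shat m T M' \<Longrightarrow> ipr_loop p shat m \<rho> T M' R \<Longrightarrow> ipr_loop p shat m \<rho> T M R"

definition ipr_output ::
  "nat \<Rightarrow> nat \<Rightarrow> (nat \<Rightarrow> real) \<Rightarrow> (nat \<Rightarrow> real) \<Rightarrow> real \<Rightarrow> real \<Rightarrow> real \<Rightarrow> nat set list \<Rightarrow> bool" where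
  "ipr_output n m p shat \<alpha> \<delta> \<rho> bags \<longleftrightarrow>
     (\<exists>B M. ptas_partition n m p shat \<delta> B \<and>
        ipr_loop p shat m \<rho> ((1 + \<alpha>) * optC m p shat B) (\<lambda>i. [B i]) M \<and>
        bags = allbags m M)"

definition bag_sizes :: "(nat \<Rightarrow> real) \<Rightarrow> nat set list \<Rightarrow> nat \<Rightarrow> real" where
  "bag_sizes p bags = (\<lambda>k. bagp p (bags ! k))"

text \<open>g (bag index \<mapsto> machine) is a possible output of a PTAS with accuracy \<delta>
  for assigning the bags to machines with true speeds s.\<close>
definition sched_ptas ::
  "(nat \<Rightarrow> real) \<Rightarrow> (nat \<Rightarrow> real) \<Rightarrow> nat \<Rightarrow> real \<Rightarrow> nat set list \<Rightarrow> (nat \<Rightarrow> nat) \<Rightarrow> bool" where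
  "sched_ptas p s m \<delta> bags g \<longleftrightarrow>
     feasible_within (bag_sizes p bags) s (length bags) m g
       ((1 + \<delta>) * opt (bag_sizes p bags) s (length bags) m)"

text \<open>Prediction error at most \<eta>, after scaling shat so that max shat = max s.\<close>
definition pred_error_le :: "nat \<Rightarrow> (nat \<Rightarrow> real) \<Rightarrow> (nat \<Rightarrow> real) \<Rightarrow> real \<Rightarrow> bool" where
  "pred_error_le m s shat \<eta> \<longleftrightarrow>
     (let c = Max (s ` {..<m}) / Max (shat ` {..<m}) in
      \<forall>i<m. shat i > 0 \<and> max (c * shat i) (s i) \<le> \<eta> * min (c * shat i) (s i))"

end

theory Submission
  imports Defs
begin

lemma opt_le:
  assumes "T \<ge> 0" "feasible_within q s N m f T"
  shows "opt q s N m \<le> T"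
  unfolding opt_def
  by (rule cInf_lower) (use assms in \<open>auto intro: bdd_belowI[of _ 0]\<close>)

lemma feasible_nonempty:
  assumes "m \<ge> 1" "\<forall>i<m. s i > 0" "\<forall>j<N. q j \<ge> 0"
  shows "feasible_within q s N m (\<lambda>_. 0) (sum q {..<N} / s 0)"
proof -
  have s0: "s 0 > 0" using assms by auto
  have "load q N (\<lambda>_. 0) i \<le> sum q {..<N} / s 0 * s i" if "i < m" for i
  proof (cases "i = 0")
    case True
    then show ?thesis using s0 by (simp add: load_def lessThan_def)
  next
    case False
    then have "load q N (\<lambda>_. 0) i = 0" by (simp add: load_def)
    moreover have "sum q {..<N} \<ge> 0" using assms by (auto intro: sum_nonneg)
    moreover have "s i > 0" using assms that by auto
    ultimately show ?thesis using s0 by simp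
  qed
  then show ?thesis using assms unfolding feasible_within_def by auto
qed

lemma opt_ge:
  assumes "m \<ge> 1" "\<forall>i<m. s i > 0" "\<forall>j<N. q j \<ge> 0"
    and "\<And>T f. T \<ge> 0 \<Longrightarrow> feasible_within q s N m f T \<Longrightarrow> X \<le> T"
  shows "X \<le> opt q s N m"
proof -
  have ne: "{T. T \<ge> 0 \<and> (\<exists>f. feasible_within q s N m f T)} \<noteq> {}"
  proof -
    have "sum q {..<N} \<ge> 0" using assms by (auto intro: sum_nonneg)
    then have "sum q {..<N} / s 0 \<ge> 0" using assms by auto
    then show ?thesis using feasible_nonempty[OF assms(1-3)] by blast
  qed
  show ?thesis unfolding opt_def
    by (rule cInf_greatest[OF ne]) (use assms(4) in auto)
qed

lemma opt_nonneg:
  assumes "m \<ge> 1" "\<forall>i<m. s i > 0" "\<forall>j<N. q j \<ge> 0"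
  shows "0 \<le> opt q s N m"
  by (rule opt_ge[OF assms]) auto

lemma load_sum:
  "(\<Sum>i<m. load q N h i) = sum q {k. k < N \<and> h k < m}"
proof -
  have "(\<Sum>i<m. load q N h i) = (\<Sum>y<m. sum q {x. x \<in> {k. k < N \<and> h k < m} \<and> h x = y})"
    unfolding load_def by (intro sum.cong) auto
  also have "\<dots> = sum q {k. k < N \<and> h k < m}"
    by (rule sum.group) auto
  finally show ?thesis .
qed

lemma greedy:
  fixes a s :: "nat \<Rightarrow> real" and T c \<mu> :: real
  assumes "finite R"
  shows "R \<subseteq> {..<m} \<Longrightarrow> (\<forall>k<m. k \<notin> R \<longrightarrow> h k < m) \<Longrightarrow> (\<forall>k\<in>R. h k \<ge> m) \<Longrightarrow>
    (\<forall>i<m. load a m h i \<le> T * s i) \<Longrightarrow>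
    (\<forall>k<m. k \<notin> R \<longrightarrow> (\<forall>k'\<in>R. a k' \<le> a k)) \<Longrightarrow>
    (\<forall>k'\<in>R. a k' \<le> c * \<mu>) \<Longrightarrow> (\<forall>k<m. \<mu> \<le> a k) \<Longrightarrow> 0 \<le> \<mu> \<Longrightarrow> 2 \<le> c \<Longrightarrow>
    c * (\<Sum>k<m. a k) \<le> T * (\<Sum>i<m. s i) \<Longrightarrow>
    \<exists>h'. (\<forall>k<m. h' k < m) \<and> (\<forall>i<m. load a m h' i \<le> T * s i)"
  using assms
proof (induction R arbitrary: h rule: finite_ranking_induct[where f = a])
  case empty
  then show ?case by blast
next
  case (insert x S)
  note IH = insert.IH
  show ?case
  proof (cases "x \<in> S")
    case True
    then have "insert x S = S" by auto
    then show ?thesis using IH insert.prems by simp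
  next
  case False
  note xS = False
  have xm: "x < m" using insert.prems(1) by auto
  have m1: "m \<ge> 1" using xm by auto
  have ax0: "0 \<le> a x" using insert.prems(7,8) xm by force
  have "\<exists>i<m. load a m h i + a x \<le> T * s i"
  proof (rule ccontr)
    assume "\<not> ?thesis"
    then have lt: "\<forall>i<m. T * s i < load a m h i + a x" by force
    have "(\<Sum>i<m. T * s i) < (\<Sum>i<m. load a m h i + a x)"
      by (rule sum_strict_mono) (use lt m1 in \<open>auto simp: lessThan_empty_iff\<close>)
    also have "\<dots> = sum a {k. k < m \<and> h k < m} + real m * a x"
      by (simp add: sum.distrib load_sum)
    finally have A: "T * (\<Sum>i<m. s i) < sum a {k. k < m \<and> h k < m} + real m * a x"
      by (simp add: sum_distrib_left)
    define Pl where "Pl = {k. k < m \<and> h k < m}"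
    have Pl_eq: "Pl = {..<m} - insert x S"
      using insert.prems(2,3) unfolding Pl_def by force
    have fin: "finite Pl" unfolding Pl_def by auto
    have split: "(\<Sum>k<m. a k) = sum a Pl + a x + sum a S"
    proof -
      have "{..<m} = Pl \<union> insert x S" using Pl_eq insert.prems(1) by auto
      moreover have "Pl \<inter> insert x S = {}" using Pl_eq by auto
      ultimately have "(\<Sum>k<m. a k) = sum a Pl + sum a (insert x S)"
        using fin insert.hyps(1) by (metis finite_insert sum.union_disjoint)
      moreover have "x \<notin> S" using xS by auto
      ultimately show ?thesis using insert.hyps(1) by simp
    qed
    have cardsplit: "card Pl + card S + 1 = m"
    proof -
      have "card ({..<m} - insert x S) = m - card (insert x S)"
        using insert.prems(1) by (simp add: card_Diff_subset insert.hyps(1))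
      moreover have "card (insert x S) = card S + 1" using insert.hyps xS by auto
      moreover have "card (insert x S) \<le> m"
        using insert.prems(1) by (metis card_lessThan card_mono finite_lessThan)
      ultimately show ?thesis using Pl_eq by auto
    qed
    have PlL: "sum a Pl \<ge> real (card Pl) * a x"
    proof -
      have "\<forall>k\<in>Pl. a x \<le> a k" using insert.prems(5) Pl_eq by auto
      then have "sum (\<lambda>_. a x) Pl \<le> sum a Pl" by (intro sum_mono) auto
      then show ?thesis by simp
    qed
    have SL: "sum a S \<ge> real (card S) * \<mu>"
    proof -
      have "\<forall>k\<in>S. \<mu> \<le> a k" using insert.prems(1,7) by auto
      then have "sum (\<lambda>_. \<mu>) S \<le> sum a S" by (intro sum_mono) auto
      then show ?thesis by simp
    qed
    have Pl0: "sum a Pl \<ge> 0" using PlL ax0 by (meson mult_nonneg_nonneg of_nat_0_le_iff order_trans)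
    have cmu: "a x \<le> c * \<mu>" using insert.prems(6) by auto
    have B: "c * (sum a Pl + a x + sum a S) \<le> T * (\<Sum>i<m. s i)"
      using insert.prems(10) split by simp
    have "c * sum a S \<ge> real (card S) * a x"
    proof -
      have "c * sum a S \<ge> c * (real (card S) * \<mu>)"
        using SL insert.prems(9) by (intro mult_left_mono) auto
      moreover have "c * (real (card S) * \<mu>) = real (card S) * (c * \<mu>)" by simp
      moreover have "real (card S) * (c * \<mu>) \<ge> real (card S) * a x"
        using cmu by (intro mult_left_mono) auto
      ultimately show ?thesis by linarith
    qed
    moreover have "(c - 1) * sum a Pl \<ge> sum a Pl"
      using mult_right_mono[of 1 "c - 1" "sum a Pl"] Pl0 insert.prems(9) by simp
    moreover have "real m = real (card Pl) + real (card S) + 1" using cardsplit by (metis of_nat_1 of_nat_add)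
    ultimately have "real m * a x \<le> c * (sum a Pl + a x + sum a S) - sum a Pl + (1 - c) * a x"
      using PlL by (simp add: algebra_simps distrib_right)
    moreover have "(1 - c) * a x \<le> 0" using ax0 insert.prems(9) by (simp add: mult_nonpos_nonneg)
    ultimately show False using A B unfolding Pl_def by linarith
  qed
  then obtain i where im: "i < m" and ifit: "load a m h i + a x \<le> T * s i" by blast
  define h1 where "h1 = h(x := i)"
  have load1: "load a m h1 i' = load a m h i' + (if i' = i then a x else 0)" if "i' < m" for i'
  proof -
    have hx: "h x \<ge> m" using insert.prems(3) by auto
    show ?thesis
    proof (cases "i' = i")
      case True
      have "{k. k < m \<and> h1 k = i'} = insert x {k. k < m \<and> h k = i'}"
        using True xm hx that unfolding h1_def by auto
      moreover have "x \<notin> {k. k < m \<and> h k = i'}" using hx that by auto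
      ultimately show ?thesis using True by (simp add: load_def)
    next
      case False
      have "{k. k < m \<and> h1 k = i'} = {k. k < m \<and> h k = i'}"
        using False hx that unfolding h1_def by auto
      then show ?thesis using False by (simp add: load_def)
    qed
  qed
  have "\<exists>h'. (\<forall>k<m. h' k < m) \<and> (\<forall>i<m. load a m h' i \<le> T * s i)"
  proof (rule IH)
    show "S \<subseteq> {..<m}" using insert.prems(1) by auto
    show "\<forall>k<m. k \<notin> S \<longrightarrow> h1 k < m" using insert.prems(2) im unfolding h1_def by auto
    show "\<forall>k\<in>S. m \<le> h1 k" using insert.prems(3) xS unfolding h1_def by auto
    show "\<forall>i<m. load a m h1 i \<le> T * s i" using load1 insert.prems(4) ifit by auto
    show "\<forall>k<m. k \<notin> S \<longrightarrow> (\<forall>k'\<in>S. a k' \<le> a k)"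
      using insert.prems(5) insert.hyps(2) by (metis insert_iff)
    show "\<forall>k'\<in>S. a k' \<le> c * \<mu>" using insert.prems(6) by auto
  qed (use insert.prems insert.hyps in auto)
  then show ?thesis .
  qed
qed

lemma bagp_as_sum:
  assumes "B \<subseteq> {..<n}"
  shows "bagp p B = (\<Sum>j<n. if j \<in> B then p j else 0)"
proof -
  have "{x \<in> {..<n}. x \<in> B} = B" using assms by auto
  then show ?thesis unfolding bagp_def using sum.inter_filter[of "{..<n}" p "\<lambda>x. x \<in> B"] by simp
qed

lemma bag_total:
  fixes bs :: "nat \<Rightarrow> nat set" and N n :: nat and p :: "nat \<Rightarrow> real"
  assumes "\<forall>k<N. bs k \<subseteq> {..<n}"
  shows "(\<Sum>k<N. bagp p (bs k)) = (\<Sum>j<n. p j * real (card {k. k < N \<and> j \<in> bs k}))"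
proof -
  have "(\<Sum>k<N. bagp p (bs k)) = (\<Sum>k<N. \<Sum>j<n. if j \<in> bs k then p j else 0)"
    using assms by (intro sum.cong) (auto simp: bagp_as_sum)
  also have "\<dots> = (\<Sum>j<n. \<Sum>k<N. if j \<in> bs k then p j else 0)" by (rule sum.swap)
  also have "\<dots> = (\<Sum>j<n. p j * real (card {k. k < N \<and> j \<in> bs k}))"
  proof (intro sum.cong refl)
    fix j
    have "(\<Sum>k<N. if j \<in> bs k then p j else 0) = sum (\<lambda>_. p j) {k \<in> {..<N}. j \<in> bs k}"
      by (rule sum.inter_filter[symmetric]) simp
    also have "{k \<in> {..<N}. j \<in> bs k} = {k. k < N \<and> j \<in> bs k}" by auto
    finally show "(\<Sum>k<N. if j \<in> bs k then p j else 0) = p j * real (card {k. k < N \<and> j \<in> bs k})"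
      by simp
  qed
  finally show ?thesis .
qed

lemma sched_bags:
  fixes p s :: "nat \<Rightarrow> real" and bs :: "nat set list" and c \<mu> :: real
  assumes len: "length bs = m" and m1: "m \<ge> 1" and spos: "\<forall>i<m. s i > 0"
    and pnn: "\<forall>j<n. p j \<ge> 0"
    and cnt: "\<forall>j. card {k. k < m \<and> j \<in> bs ! k} = (if j < n then 1 else 0)"
    and mu: "\<forall>k<m. \<mu> \<le> bagp p (bs ! k)" "0 \<le> \<mu>"
    and multi: "\<forall>k<m. card (bs ! k) \<ge> 2 \<longrightarrow> bagp p (bs ! k) \<le> c * \<mu>" and c2: "2 \<le> c"
  shows "opt (bag_sizes p bs) s m m \<le> c * opt p s n m"
proof -
  define a where "a = bag_sizes p bs"
  have a_def': "a k = bagp p (bs ! k)" for k unfolding a_def bag_sizes_def by simp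
  have sub: "bs ! k \<subseteq> {..<n}" if "k < m" for k
  proof
    fix j assume "j \<in> bs ! k"
    then have "k \<in> {k. k < m \<and> j \<in> bs ! k}" using that by auto
    then have "card {k. k < m \<and> j \<in> bs ! k} \<noteq> 0" by (subst card_0_eq) auto
    then show "j \<in> {..<n}" using cnt[rule_format, of j] by (auto split: if_splits)
  qed
  have fin: "finite (bs ! k)" if "k < m" for k using sub[OF that] finite_subset by blast
  have total: "(\<Sum>k<m. a k) = (\<Sum>j<n. p j)"
  proof -
    have "(\<Sum>k<m. a k) = (\<Sum>j<n. p j * real (card {k. k < m \<and> j \<in> bs ! k}))"
      unfolding a_def' using bag_total[of m "\<lambda>k. bs ! k" n p] sub by auto
    also have "\<dots> = (\<Sum>j<n. p j)" using cnt by (intro sum.cong) auto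
    finally show ?thesis .
  qed
  have a0: "0 \<le> a k" if "k < m" for k using mu that a_def' by force
  have "(opt a s m m) / c \<le> T" if T0: "T \<ge> 0" and feas: "feasible_within p s n m f T" for T f
  proof -
    have fm: "\<forall>j<n. f j < m" and fl: "\<forall>i<m. load p n f i \<le> T * s i"
      using feas unfolding feasible_within_def by auto
    define Big where "Big = {k. k < m \<and> a k > c * \<mu>}"
    have bigsing: "\<exists>j. bs ! k = {j}" if "k \<in> Big" for k
    proof -
      have km: "k < m" and ak: "a k > c * \<mu>" using that unfolding Big_def by auto
      have "\<not> card (bs ! k) \<ge> 2" using multi km ak a_def' by force
      moreover have "bs ! k \<noteq> {}"
      proof
        assume "bs ! k = {}"
        then have "a k = 0" unfolding a_def' bagp_def by simp
        moreover have "c * \<mu> \<ge> 0" using mu c2 by simp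
        ultimately show False using ak by simp
      qed
      moreover have "card (bs ! k) \<noteq> 0" using calculation(2) fin[OF km] by simp
      ultimately have "card (bs ! k) = 1" by linarith
      then show ?thesis by (rule card_1_singletonE) auto
    qed
    define job where "job k = the_elem (bs ! k)" for k
    have bsjob: "bs ! k = {job k}" if kB: "k \<in> Big" for k
    proof -
      obtain j where "bs ! k = {j}" using bigsing[OF kB] by blast
      then show ?thesis unfolding job_def by simp
    qed
    have jobn: "job k < n" if "k \<in> Big" for k
    proof -
      have "k < m" using that unfolding Big_def by auto
      moreover have "job k \<in> bs ! k" using bsjob[OF that] by auto
      ultimately show ?thesis using sub by auto
    qed
    have ajob: "a k = p (job k)" if "k \<in> Big" for k
      using bsjob[OF that] unfolding a_def' bagp_def by simp
    have injjob: "inj_on job Big"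
    proof
      fix k k' assume kB: "k \<in> Big" and k'B: "k' \<in> Big" and eq: "job k = job k'"
      show "k = k'"
      proof (rule ccontr)
        assume ne: "k \<noteq> k'"
        have "{k, k'} \<subseteq> {x. x < m \<and> job k \<in> bs ! x}"
          using kB k'B bsjob eq unfolding Big_def by auto
        then have "card {k, k'} \<le> card {x. x < m \<and> job k \<in> bs ! x}"
          by (intro card_mono) auto
        then show False using ne cnt jobn[OF kB] by auto
      qed
    qed
    define h0 where "h0 k = (if k \<in> Big then f (job k) else m)" for k
    define R where "R = {k. k < m \<and> k \<notin> Big}"
    have load0: "load a m h0 i \<le> (c * T) * s i" if im: "i < m" for i
    proof -
      have "load a m h0 i = sum a {k. k \<in> Big \<and> f (job k) = i}"
        unfolding load_def h0_def using im by (intro sum.cong) (auto simp: Big_def)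
      also have "\<dots> = sum (\<lambda>k. p (job k)) {k. k \<in> Big \<and> f (job k) = i}"
        using ajob by (intro sum.cong) auto
      also have "\<dots> = sum p (job ` {k. k \<in> Big \<and> f (job k) = i})"
      proof -
        have "inj_on job {k. k \<in> Big \<and> f (job k) = i}" by (rule inj_on_subset[OF injjob]) auto
        then show ?thesis by (simp add: sum.reindex)
      qed
      also have "\<dots> \<le> sum p {j. j < n \<and> f j = i}"
        proof (rule sum_mono2)
        show "job ` {k. k \<in> Big \<and> f (job k) = i} \<subseteq> {j. j < n \<and> f j = i}" using jobn by auto
        fix b assume "b \<in> {j. j < n \<and> f j = i} - job ` {k. k \<in> Big \<and> f (job k) = i}"
        then show "0 \<le> p b" using pnn by auto
      qed simp
      also have "\<dots> = load p n f i" unfolding load_def by simp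
      also have "\<dots> \<le> T * s i" using fl im by auto
      also have "\<dots> \<le> (c * T) * s i"
      proof -
        have "T * s i \<ge> 0" using T0 spos im by auto
        then show ?thesis using c2 mult_right_mono[of 1 c "T * s i"] by (simp add: mult.assoc)
      qed
      finally show ?thesis .
    qed
    have ctot: "c * (\<Sum>k<m. a k) \<le> (c * T) * (\<Sum>i<m. s i)"
    proof -
      have "(\<Sum>k<m. a k) = (\<Sum>j<n. p j)" by (rule total)
      also have "\<dots> = (\<Sum>i<m. load p n f i)"
      proof -
        have "{k. k < n \<and> f k < m} = {..<n}" using fm by auto
        then show ?thesis using load_sum[where q=p and N=n and h=f and m=m] by simp
      qed
      also have "\<dots> \<le> (\<Sum>i<m. T * s i)" by (rule sum_mono) (use fl in auto)
      finally have "(\<Sum>k<m. a k) \<le> T * (\<Sum>i<m. s i)" by (simp add: sum_distrib_left)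
      then show ?thesis using c2 by (simp add: mult.assoc)
    qed
    obtain h' where h': "\<forall>k<m. h' k < m" "\<forall>i<m. load a m h' i \<le> (c * T) * s i"
    proof -
      have "\<exists>h'. (\<forall>k<m. h' k < m) \<and> (\<forall>i<m. load a m h' i \<le> (c * T) * s i)"
      proof (rule greedy[of R m h0 a "c * T" s c \<mu>])
        show "finite R" unfolding R_def by auto
        show "R \<subseteq> {..<m}" unfolding R_def by auto
        show "\<forall>k<m. k \<notin> R \<longrightarrow> h0 k < m" unfolding R_def h0_def using fm jobn by auto
        show "\<forall>k\<in>R. m \<le> h0 k" unfolding R_def h0_def by auto
        show "\<forall>i<m. load a m h0 i \<le> c * T * s i" using load0 by auto
        show "\<forall>k<m. k \<notin> R \<longrightarrow> (\<forall>k'\<in>R. a k' \<le> a k)" unfolding R_def Big_def by auto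
        show "\<forall>k'\<in>R. a k' \<le> c * \<mu>" unfolding R_def Big_def by auto
        show "\<forall>k<m. \<mu> \<le> a k" using mu a_def' by auto
      qed (use mu c2 ctot in auto)
      then show ?thesis using that by blast
    qed
    have "opt a s m m \<le> c * T"
      by (rule opt_le) (use T0 c2 h' in \<open>auto simp: feasible_within_def\<close>)
    then show ?thesis using c2 by (simp add: divide_le_eq mult.commute)
  qed
  then have "opt a s m m / c \<le> opt p s n m"
    by (intro opt_ge[OF m1 spos pnn]) auto
  then show ?thesis unfolding a_def using c2 by (simp add: divide_le_eq mult.commute)
qed

definition cnt :: "nat set list \<Rightarrow> nat \<Rightarrow> nat" where
  "cnt xs j = length (filter (\<lambda>B. j \<in> B) xs)"

lemma cnt_Nil[simp]: "cnt [] j = 0" by (simp add: cnt_def)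
lemma cnt_Cons[simp]: "cnt (B # xs) j = (if j \<in> B then 1 else 0) + cnt xs j" by (simp add: cnt_def)
lemma cnt_append[simp]: "cnt (xs @ ys) j = cnt xs j + cnt ys j" by (simp add: cnt_def)

lemma cnt_card: "cnt xs j = card {k. k < length xs \<and> j \<in> xs ! k}"
  unfolding cnt_def by (rule length_filter_conv_card)

lemma cnt_update:
  assumes "k < length bs"
  shows "cnt (bs[k := B']) x + (if x \<in> bs ! k then 1 else 0) = cnt bs x + (if x \<in> B' then 1 else 0)"
proof -
  have e1: "cnt (bs[k := B']) x = cnt (take k bs) x + (if x \<in> B' then 1 else 0) + cnt (drop (Suc k) bs) x"
    using assms by (simp add: upd_conv_take_nth_drop)
  have "cnt bs x = cnt (take k bs @ bs ! k # drop (Suc k) bs) x"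
    using assms by (simp add: id_take_nth_drop[symmetric])
  then have e2: "cnt bs x = cnt (take k bs) x + (if x \<in> bs ! k then 1 else 0) + cnt (drop (Suc k) bs) x"
    by simp
  show ?thesis using e1 e2 by simp
qed

lemma cnt_pos_iff: "cnt xs j > 0 \<longleftrightarrow> (\<exists>B\<in>set xs. j \<in> B)"
  unfolding cnt_def by (induction xs) auto

lemma set_update_sub: "set (bs[k := B']) \<subseteq> insert B' (set bs)"
  by (metis set_update_subset_insert)

lemma lpt_basic:
  assumes "lpt_run p js bs res"
  shows "distinct js \<Longrightarrow> (\<forall>j\<in>set js. \<forall>B\<in>set bs. j \<notin> B) \<Longrightarrow>
    length res = length bs \<and> (\<forall>x. cnt res x = cnt bs x + (if x \<in> set js then 1 else 0)) \<and>
    (\<forall>B\<in>set res. B \<subseteq> \<Union>(set bs) \<union> set js)"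
  using assms
proof (induction rule: lpt_run.induct)
  case (lpt_nil bs)
  then show ?case by auto
next
  case (lpt_cons k bs js j res)
  let ?bs' = "bs[k := insert j (bs ! k)]"
  have jn: "j \<notin> bs ! k" using lpt_cons.prems(2) lpt_cons.hyps(1) by auto
  have IH: "length res = length ?bs' \<and> (\<forall>x. cnt res x = cnt ?bs' x + (if x \<in> set js then 1 else 0)) \<and>
    (\<forall>B\<in>set res. B \<subseteq> \<Union>(set ?bs') \<union> set js)"
  proof (rule lpt_cons.IH)
    show "distinct js" using lpt_cons.prems by auto
    show "\<forall>j'\<in>set js. \<forall>B\<in>set ?bs'. j' \<notin> B"
    proof (intro ballI)
      fix j' B assume j': "j' \<in> set js" and B: "B \<in> set ?bs'"
      have B': "B \<in> insert (insert j (bs ! k)) (set bs)" using B set_update_sub[of bs k "insert j (bs ! k)"] by blast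
      have jj: "j' \<noteq> j" using lpt_cons.prems(1) j' by auto
      have bk: "bs ! k \<in> set bs" using lpt_cons.hyps(1) by simp
      have nb: "\<forall>B0\<in>set bs. j' \<notin> B0" using lpt_cons.prems(2) j' by simp
      show "j' \<notin> B"
      proof (cases "B = insert j (bs ! k)")
        case True
        then show ?thesis using jj nb bk by simp
      next
        case False
        then show ?thesis using B' nb by simp
      qed
    qed
  qed
  have c1: "cnt ?bs' x = cnt bs x + (if x = j then 1 else 0)" for x
    using cnt_update[OF lpt_cons.hyps(1), of "insert j (bs ! k)" x] jn by auto
  have U: "\<Union>(set ?bs') \<subseteq> \<Union>(set bs) \<union> {j}"
  proof
    fix y assume "y \<in> \<Union>(set ?bs')"
    then obtain B where B: "B \<in> set ?bs'" "y \<in> B" by blast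
    have B': "B \<in> insert (insert j (bs ! k)) (set bs)" using B(1) set_update_sub[of bs k "insert j (bs ! k)"] by blast
    have bk: "bs ! k \<in> set bs" using lpt_cons.hyps(1) by simp
    show "y \<in> \<Union>(set bs) \<union> {j}"
    proof (cases "B = insert j (bs ! k)")
      case True
      then show ?thesis using B(2) bk by blast
    next
      case False
      then show ?thesis using B' B(2) by blast
    qed
  qed
  have jnin: "j \<notin> set js" using lpt_cons.prems(1) by simp
  show ?case
  proof (intro conjI allI ballI)
    show "length res = length bs" using IH by simp
  next
    fix x
    have "cnt res x = cnt ?bs' x + (if x \<in> set js then 1 else 0)" using IH by blast
    then show "cnt res x = cnt bs x + (if x \<in> set (j # js) then 1 else 0)"
      using c1[of x] jnin by auto
  next
    fix B assume "B \<in> set res"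
    then have "B \<subseteq> \<Union>(set ?bs') \<union> set js" using IH by blast
    then show "B \<subseteq> \<Union>(set bs) \<union> set (j # js)" using U by auto
  qed
qed

definition Bal :: "(nat \<Rightarrow> real) \<Rightarrow> nat set list \<Rightarrow> bool" where
  "Bal p bs \<longleftrightarrow> (\<forall>x<length bs. \<forall>z<length bs. 2 \<le> card (bs ! x) \<longrightarrow> bagp p (bs ! x) \<le> 2 * bagp p (bs ! z))"

lemma bagp_insert: "finite B \<Longrightarrow> j \<notin> B \<Longrightarrow> bagp p (insert j B) = bagp p B + p j"
  unfolding bagp_def by simp

lemma bagp_nonneg: "(\<forall>y\<in>B. 0 \<le> p y) \<Longrightarrow> 0 \<le> bagp p B"
  unfolding bagp_def by (rule sum_nonneg) auto

lemma bagp_ge_elem: "finite B \<Longrightarrow> (\<forall>y\<in>B. 0 \<le> p y) \<Longrightarrow> y \<in> B \<Longrightarrow> p y \<le> bagp p B"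
  unfolding bagp_def by (rule member_le_sum) auto

lemma lpt_bal:
  assumes "lpt_run p js bs res"
  shows "distinct js \<Longrightarrow> sorted_wrt (\<lambda>a b. p b \<le> p a) js \<Longrightarrow> (\<forall>j\<in>set js. \<forall>B\<in>set bs. j \<notin> B) \<Longrightarrow>
    (\<forall>B\<in>set bs. finite B) \<Longrightarrow> (\<forall>B\<in>set bs. \<forall>y\<in>B. 0 \<le> p y) \<Longrightarrow> (\<forall>j\<in>set js. 0 \<le> p j) \<Longrightarrow>
    (\<forall>B\<in>set bs. \<forall>y\<in>B. \<forall>j\<in>set js. p j \<le> p y) \<Longrightarrow> Bal p bs \<Longrightarrow> Bal p res"
  using assms
proof (induction rule: lpt_run.induct)
  case (lpt_nil bs)
  then show ?case by auto
next
  case (lpt_cons k bs js j res)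
  let ?bs' = "bs[k := insert j (bs ! k)]"
  have km: "k < length bs" using lpt_cons.hyps(1) .
  have bk: "bs ! k \<in> set bs" using km by simp
  have P3: "\<forall>B\<in>set bs. j \<notin> B" using lpt_cons.prems(3) by simp
  have jn: "j \<notin> bs ! k" using P3 bk by blast
  have fk: "finite (bs ! k)" using lpt_cons.prems(4) bk by blast
  have setbs': "set ?bs' \<subseteq> insert (insert j (bs ! k)) (set bs)" by (rule set_update_sub)
  have pj0: "0 \<le> p j" using lpt_cons.prems(6) by simp
  have vk': "bagp p (?bs' ! k) = bagp p (bs ! k) + p j"
    using km jn fk by (simp add: bagp_insert)
  have vt': "?bs' ! t = bs ! t" if "t \<noteq> k" for t using that by simp
  have mono: "bagp p (bs ! t) \<le> bagp p (?bs' ! t)" if "t < length bs" for t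
  proof (cases "t = k")
    case True
    then show ?thesis using vk' pj0 by simp
  next
    case False
    then show ?thesis using vt' by simp
  qed
  have bal': "Bal p ?bs'"
    unfolding Bal_def
  proof (intro allI impI)
    fix x z assume x: "x < length ?bs'" and z: "z < length ?bs'" and c2: "2 \<le> card (?bs' ! x)"
    have x': "x < length bs" and z': "z < length bs" using x z by auto
    show "bagp p (?bs' ! x) \<le> 2 * bagp p (?bs' ! z)"
    proof (cases "x = k")
      case False
      then have "2 \<le> card (bs ! x)" using c2 by simp
      then have "bagp p (bs ! x) \<le> 2 * bagp p (bs ! z)" using lpt_cons.prems(8) x' z' unfolding Bal_def by blast
      then show ?thesis using False mono[OF z'] by simp
    next
      case True
      have "card (insert j (bs ! k)) \<ge> 2" using c2 True km by simp
      then have "bs ! k \<noteq> {}" by auto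
      then obtain y where y: "y \<in> bs ! k" by auto
      have "\<forall>y\<in>bs ! k. \<forall>j'\<in>set (j # js). p j' \<le> p y" using lpt_cons.prems(7) bk by blast
      then have "p j \<le> p y" using y by simp
      also have "p y \<le> bagp p (bs ! k)"
      proof (rule bagp_ge_elem[OF fk _ y])
        show "\<forall>y\<in>bs ! k. 0 \<le> p y" using lpt_cons.prems(5) bk by blast
      qed
      finally have pj: "p j \<le> bagp p (bs ! k)" .
      have "bagp p (bs ! k) \<le> bagp p (bs ! z)" using lpt_cons.hyps(2) z' by blast
      then have "bagp p (?bs' ! x) \<le> 2 * bagp p (bs ! z)" using True vk' pj by simp
      then show ?thesis using mono[OF z'] by simp
    qed
  qed
  show ?case
  proof (rule lpt_cons.IH)
    show "distinct js" using lpt_cons.prems(1) by simp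
    show "sorted_wrt (\<lambda>a b. p b \<le> p a) js" using lpt_cons.prems(2) by simp
    show "\<forall>j'\<in>set js. \<forall>B\<in>set ?bs'. j' \<notin> B"
    proof (intro ballI)
      fix j' B assume j': "j' \<in> set js" and B: "B \<in> set ?bs'"
      have B': "B \<in> insert (insert j (bs ! k)) (set bs)" using B setbs' by blast
      have jj: "j' \<noteq> j" using lpt_cons.prems(1) j' by auto
      have nb: "\<forall>B0\<in>set bs. j' \<notin> B0" using lpt_cons.prems(3) j' by simp
      show "j' \<notin> B"
      proof (cases "B = insert j (bs ! k)")
        case True
        then show ?thesis using jj nb bk by simp
      next
        case False
        then show ?thesis using B' nb by simp
      qed
    qed
    show "\<forall>B\<in>set ?bs'. finite B"
    proof
      fix B assume "B \<in> set ?bs'"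
      then have B': "B \<in> insert (insert j (bs ! k)) (set bs)" using setbs' by blast
      then show "finite B" using fk lpt_cons.prems(4) by (cases "B = insert j (bs ! k)") auto
    qed
    show "\<forall>B\<in>set ?bs'. \<forall>y\<in>B. 0 \<le> p y"
    proof (intro ballI)
      fix B y assume "B \<in> set ?bs'" "y \<in> B"
      then have B': "B \<in> insert (insert j (bs ! k)) (set bs)" using setbs' by blast
      have a: "\<forall>y\<in>bs ! k. 0 \<le> p y" using lpt_cons.prems(5) bk by blast
      show "0 \<le> p y"
      proof (cases "B = insert j (bs ! k)")
        case True
        then show ?thesis using a pj0 \<open>y \<in> B\<close> by auto
      next
        case False
        then have "B \<in> set bs" using B' by simp
        then show ?thesis using lpt_cons.prems(5) \<open>y \<in> B\<close> by blast
      qed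
    qed
    show "\<forall>j\<in>set js. 0 \<le> p j" using lpt_cons.prems(6) by simp
    show "\<forall>B\<in>set ?bs'. \<forall>y\<in>B. \<forall>j'\<in>set js. p j' \<le> p y"
    proof (intro ballI)
      fix B y j' assume B: "B \<in> set ?bs'" and y: "y \<in> B" and j': "j' \<in> set js"
      have B': "B \<in> insert (insert j (bs ! k)) (set bs)" using B setbs' by blast
      show "p j' \<le> p y"
      proof (cases "y = j")
        case True
        then show ?thesis using lpt_cons.prems(2) j' by simp
      next
        case False
        then obtain B0 where B0: "B0 \<in> set bs" "y \<in> B0"
          using B' y bk by (cases "B = insert j (bs ! k)") auto
        have "\<forall>j'\<in>set (j # js). p j' \<le> p y" using lpt_cons.prems(7) B0 by blast
        then show ?thesis using j' by simp
      qed
    qed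
    show "Bal p ?bs'" by (rule bal')
  qed
qed

lemma cnt_two:
  assumes "\<forall>j. cnt xs j \<le> 1" "x < length xs" "x' < length xs" "x \<noteq> x'" "y \<in> xs ! x" "y \<in> xs ! x'"
  shows False
proof -
  have "{x, x'} \<subseteq> {k. k < length xs \<and> y \<in> xs ! k}" using assms by auto
  then have "card {x, x'} \<le> card {k. k < length xs \<and> y \<in> xs ! k}" by (intro card_mono) auto
  then have "2 \<le> cnt xs y" using assms(4) by (simp add: cnt_card)
  then show False using assms(1) by (metis numeral_le_one_iff semiring_norm(69) order_trans)
qed

lemma cnt_ex:
  assumes "cnt xs y > 0"
  obtains x where "x < length xs" "y \<in> xs ! x"
proof -
  have "card {k. k < length xs \<and> y \<in> xs ! k} > 0" using assms by (simp add: cnt_card)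
  then have "{k. k < length xs \<and> y \<in> xs ! k} \<noteq> {}" by (metis card.empty less_irrefl)
  then show ?thesis using that by blast
qed

lemma cnt_pos: "x < length xs \<Longrightarrow> y \<in> xs ! x \<Longrightarrow> cnt xs y > 0"
  using cnt_pos_iff nth_mem by blast

lemma disj_sum:
  fixes xs :: "nat set list" and p :: "nat \<Rightarrow> real"
  assumes "\<forall>j. cnt xs j \<le> 1" "\<forall>B\<in>set xs. finite B" "I \<subseteq> {..<length xs}"
  shows "(\<Sum>x\<in>I. bagp p (xs ! x)) = sum p (\<Union>x\<in>I. xs ! x)"
proof -
  have fI: "finite I" using assms(3) finite_subset by blast
  have "sum p (\<Union>x\<in>I. xs ! x) = (\<Sum>x\<in>I. sum p (xs ! x))"
  proof (rule sum.UNION_disjoint[OF fI])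
    show "\<forall>x\<in>I. finite (xs ! x)" using assms(2,3) by (meson lessThan_iff nth_mem subsetD)
    show "\<forall>i\<in>I. \<forall>j\<in>I. i \<noteq> j \<longrightarrow> xs ! i \<inter> xs ! j = {}"
    proof (intro ballI impI)
      fix i j assume "i \<in> I" "j \<in> I" "i \<noteq> j"
      then show "xs ! i \<inter> xs ! j = {}"
        using cnt_two[OF assms(1)] assms(3) by blast
    qed
  qed
  then show ?thesis unfolding bagp_def by simp
qed

lemma lpt_min:
  fixes res C :: "nat set list" and \<mu> :: real and p :: "nat \<Rightarrow> real"
  assumes lr: "length res = l" and lC: "length C = l"
    and cC: "\<forall>j. cnt C j \<le> 1" and cr: "\<forall>j. cnt res j = cnt C j"
    and fC: "\<forall>B\<in>set C. finite B" and fr: "\<forall>B\<in>set res. finite B"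
    and pnn: "\<forall>B\<in>set C. \<forall>y\<in>B. 0 \<le> p y"
    and bal: "Bal p res"
    and hC: "\<forall>y<l. 2 * \<mu> - (if y = l - 1 then \<mu> else 0) \<le> bagp p (C ! y)" and mu0: "0 \<le> \<mu>"
  shows "\<forall>z<l. \<mu> \<le> bagp p (res ! z)"
proof (rule ccontr)
  assume "\<not> ?thesis"
  then obtain z0 where z0: "z0 < l" and Zlt: "bagp p (res ! z0) < \<mu>" by (meson not_le)
  define v where "v x = bagp p (res ! x)" for x
  define w where "w y = bagp p (C ! y)" for y
  define Z where "Z = v z0"
  have cr1: "\<forall>j. cnt res j \<le> 1" using cC cr by simp
  have pnn_r: "0 \<le> p y" if "x < l" "y \<in> res ! x" for x y
  proof -
    have "cnt res y > 0" using cnt_pos[of x res y] that lr by simp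
    then have "cnt C y > 0" using cr by simp
    then obtain y' where "y' < length C" "y \<in> C ! y'" by (rule cnt_ex)
    then show ?thesis using pnn by (meson nth_mem)
  qed
  have v0: "0 \<le> v x" if "x < l" for x
    unfolding v_def by (rule bagp_nonneg) (use pnn_r that in blast)
  have Z0: "0 \<le> Z" unfolding Z_def using v0 z0 by simp
  have ZZ: "Z < \<mu>" unfolding Z_def v_def using Zlt by simp
  define Big where "Big = {x. x < l \<and> card (res ! x) = 1 \<and> 2 * Z < v x}"
  define Rest where "Rest = {..<l} - Big"
  have finr: "finite (res ! x)" if "x < l" for x using fr that lr by (meson nth_mem)
  have rest_le: "v x \<le> 2 * Z" if "x \<in> Rest" for x
  proof -
    have xl: "x < l" using that unfolding Rest_def by auto
    consider "card (res ! x) \<ge> 2" | "card (res ! x) = 1" | "card (res ! x) = 0" by linarith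
    then show ?thesis
    proof cases
      case 1
      then have "bagp p (res ! x) \<le> 2 * bagp p (res ! z0)" using bal xl z0 lr unfolding Bal_def by blast
      then show ?thesis unfolding v_def Z_def by simp
    next
      case 2
      then show ?thesis using that xl unfolding Rest_def Big_def by auto
    next
      case 3
      then have "res ! x = {}" using finr[OF xl] by simp
      then show ?thesis unfolding v_def bagp_def using Z0 by simp
    qed
  qed
  have z0R: "z0 \<in> Rest" unfolding Rest_def Big_def using z0 Z0 Z_def by auto
  have finRest: "finite Rest" unfolding Rest_def by auto
  have cardR1: "card Rest \<ge> 1" using z0R finRest by (metis One_nat_def Suc_leI card_gt_0_iff empty_iff)
  have sumRest: "sum v Rest \<le> Z + 2 * Z * (real (card Rest) - 1)"
  proof -
    have "sum v Rest = v z0 + sum v (Rest - {z0})" using z0R finRest by (simp add: sum.remove)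
    also have "sum v (Rest - {z0}) \<le> sum (\<lambda>_. 2 * Z) (Rest - {z0})"
      by (rule sum_mono) (use rest_le in auto)
    also have "\<dots> = 2 * Z * (real (card Rest) - 1)"
      using z0R finRest cardR1 by (simp add: of_nat_diff mult.commute)
    finally show ?thesis unfolding Z_def by simp
  qed
  define jb where "jb x = the_elem (res ! x)" for x
  have bigjb: "res ! x = {jb x}" if "x \<in> Big" for x
  proof -
    have "card (res ! x) = 1" using that unfolding Big_def by auto
    then obtain a where "res ! x = {a}" by (rule card_1_singletonE)
    then show ?thesis unfolding jb_def by simp
  qed
  have bigl: "x < l" if "x \<in> Big" for x using that unfolding Big_def by auto
  define cid where "cid x = (SOME y. y < l \<and> jb x \<in> C ! y)" for x
  define Touch where "Touch = {y. y < l \<and> (\<exists>x\<in>Big. jb x \<in> C ! y)}"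
  have Tsub: "Touch \<subseteq> cid ` Big"
  proof
    fix y assume "y \<in> Touch"
    then obtain x where x: "x \<in> Big" and yl: "y < l" and jy: "jb x \<in> C ! y" unfolding Touch_def by auto
    have ex: "\<exists>y. y < l \<and> jb x \<in> C ! y" using yl jy by blast
    then have c: "cid x < l \<and> jb x \<in> C ! (cid x)" unfolding cid_def by (rule someI_ex)
    have "y = cid x"
    proof (rule ccontr)
      assume "y \<noteq> cid x"
      then show False using cnt_two[OF cC, of y "cid x" "jb x"] c yl jy lC by simp
    qed
    then show "y \<in> cid ` Big" using x by blast
  qed
  have finBig: "finite Big" unfolding Big_def by auto
  have cardT: "card Touch \<le> card Big"
    using card_mono[OF finite_imageI[OF finBig] Tsub] card_image_le[OF finBig, of cid] by linarith
  define NT where "NT = {..<l} - Touch"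
  have TL: "Touch \<subseteq> {..<l}" unfolding Touch_def by auto
  have BL: "Big \<subseteq> {..<l}" unfolding Big_def by auto
  have cardNT: "card NT \<ge> card Rest"
  proof -
    have "card NT = l - card Touch" unfolding NT_def using TL by (simp add: card_Diff_subset finite_subset)
    moreover have "card Rest = l - card Big" unfolding Rest_def using BL by (simp add: card_Diff_subset finite_subset)
    ultimately show ?thesis using cardT by linarith
  qed
  have NTlow: "sum w NT \<ge> 2 * \<mu> * real (card NT) - \<mu>"
  proof -
    have "sum (\<lambda>y. 2 * \<mu> - (if y = l - 1 then \<mu> else 0)) NT \<le> sum w NT"
      by (rule sum_mono) (use hC in \<open>auto simp: NT_def w_def\<close>)
    moreover have "sum (\<lambda>y. 2 * \<mu> - (if y = l - 1 then \<mu> else 0)) NT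
        = 2 * \<mu> * real (card NT) - (if l - 1 \<in> NT then \<mu> else 0)"
      unfolding NT_def by (simp add: sum_subtractf sum.delta mult.commute)
    ultimately show ?thesis using mu0 by (smt (verit))
  qed
  have sub: "(\<Union>y\<in>NT. C ! y) \<subseteq> (\<Union>x\<in>Rest. res ! x)"
  proof
    fix j assume "j \<in> (\<Union>y\<in>NT. C ! y)"
    then obtain y where yNT: "y \<in> NT" and jy: "j \<in> C ! y" by auto
    have yl: "y < l" using yNT unfolding NT_def by auto
    have "cnt C j > 0" using cnt_pos[of y C j] yl lC jy by simp
    then have "cnt res j > 0" using cr by simp
    then obtain x where xl: "x < length res" and jx: "j \<in> res ! x" by (rule cnt_ex)
    have "x \<notin> Big"
    proof
      assume xB: "x \<in> Big"
      then have "j = jb x" using bigjb jx by auto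
      then have "y \<in> Touch" unfolding Touch_def using yl xB jy by auto
      then show False using yNT unfolding NT_def by auto
    qed
    then have "x \<in> Rest" unfolding Rest_def using xl lr by auto
    then show "j \<in> (\<Union>x\<in>Rest. res ! x)" using jx by auto
  qed
  have eqNT: "sum w NT = sum p (\<Union>y\<in>NT. C ! y)"
    unfolding w_def by (rule disj_sum[OF cC fC]) (use lC in \<open>auto simp: NT_def\<close>)
  have eqR: "sum v Rest = sum p (\<Union>x\<in>Rest. res ! x)"
    unfolding v_def by (rule disj_sum[OF cr1 fr]) (use lr in \<open>auto simp: Rest_def\<close>)
  have "sum p (\<Union>y\<in>NT. C ! y) \<le> sum p (\<Union>x\<in>Rest. res ! x)"
  proof (rule sum_mono2[OF _ sub])
    show "finite (\<Union>x\<in>Rest. res ! x)" using finRest finr unfolding Rest_def by auto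
    fix b assume "b \<in> (\<Union>x\<in>Rest. res ! x) - (\<Union>y\<in>NT. C ! y)"
    then obtain x where "x \<in> Rest" "b \<in> res ! x" by auto
    then show "0 \<le> p b" using pnn_r unfolding Rest_def by auto
  qed
  then have key: "2 * \<mu> * real (card NT) - \<mu> \<le> Z + 2 * Z * (real (card Rest) - 1)"
    using NTlow eqNT eqR sumRest by linarith
  have r1: "real (card Rest) \<ge> 1" using cardR1 by simp
  have rt: "real (card NT) \<ge> real (card Rest)" using cardNT by simp
  have "Z + 2 * Z * (real (card Rest) - 1) = Z * (2 * real (card Rest) - 1)" by (simp add: algebra_simps)
  also have "\<dots> < \<mu> * (2 * real (card Rest) - 1)"
    using ZZ r1 by (intro mult_strict_right_mono) auto
  also have "\<dots> \<le> \<mu> * (2 * real (card NT) - 1)"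
    using rt mu0 by (intro mult_left_mono) auto
  finally show False using key by (simp add: algebra_simps)
qed

lemma allbags_0[simp]: "allbags 0 M = []" by (simp add: allbags_def)
lemma allbags_Suc[simp]: "allbags (Suc m) M = allbags m M @ M m" by (simp add: allbags_def)

lemma cnt_allbags: "cnt (allbags m M) j = (\<Sum>i<m. cnt (M i) j)"
  by (induction m) auto

lemma length_allbags: "length (allbags m M) = (\<Sum>i<m. length (M i))"
  by (induction m) auto

lemma set_allbags: "set (allbags m M) = (\<Union>i<m. set (M i))"
  by (induction m) (auto simp: lessThan_Suc)

lemma sumbag:
  fixes p :: "nat \<Rightarrow> real"
  assumes "\<forall>B\<in>set xs. B \<subseteq> {..<n}"
  shows "sum_list (map (bagp p) xs) = (\<Sum>j<n. p j * real (cnt xs j))"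
  using assms
proof (induction xs)
  case Nil
  then show ?case by simp
next
  case (Cons B xs)
  have "bagp p B = (\<Sum>j<n. if j \<in> B then p j else 0)" using Cons.prems by (intro bagp_as_sum) auto
  then have "sum_list (map (bagp p) (B # xs)) = (\<Sum>j<n. if j \<in> B then p j else 0) + (\<Sum>j<n. p j * real (cnt xs j))"
    using Cons by simp
  also have "\<dots> = (\<Sum>j<n. p j * real (cnt (B # xs) j))"
    by (simp add: sum.distrib[symmetric] algebra_simps) (intro sum.cong, auto)
  finally show ?case .
qed

lemma sum_upd:
  fixes g :: "'b \<Rightarrow> 'a::comm_monoid_add" and M :: "nat \<Rightarrow> 'b" and i m :: nat
  assumes "i < m"
  shows "(\<Sum>k<m. g ((M(i := x)) k)) + g (M i) = (\<Sum>k<m. g (M k)) + g x"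
proof -
  have "(\<Sum>k<m. g ((M(i := x)) k)) = g ((M(i := x)) i) + (\<Sum>k\<in>{..<m} - {i}. g ((M(i := x)) k))"
    using assms by (intro sum.remove) auto
  also have "(\<Sum>k\<in>{..<m} - {i}. g ((M(i := x)) k)) = (\<Sum>k\<in>{..<m} - {i}. g (M k))"
    by (intro sum.cong) auto
  finally have "(\<Sum>k<m. g ((M(i := x)) k)) = g x + (\<Sum>k\<in>{..<m} - {i}. g (M k))" by simp
  moreover have "(\<Sum>k<m. g (M k)) = g (M i) + (\<Sum>k\<in>{..<m} - {i}. g (M k))"
    using assms by (simp add: sum.remove)
  ultimately show ?thesis by (simp add: ac_simps)
qed

lemma remove_nth_sum:
  fixes f :: "nat set \<Rightarrow> 'a::comm_monoid_add"
  assumes "k < length A"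
  shows "sum_list (map f (take k A @ drop (Suc k) A)) + f (A ! k) = sum_list (map f A)"
proof -
  have "A = take k A @ A ! k # drop (Suc k) A" using assms by (simp add: id_take_nth_drop)
  then have "sum_list (map f A) = sum_list (map f (take k A)) + f (A ! k) + sum_list (map f (drop (Suc k) A))"
    by (metis (no_types, lifting) add.assoc list.simps(9) map_append sum_list.Cons sum_list_append)
  then show ?thesis by (simp add: ac_simps)
qed

lemma cnt_as_sum: "cnt xs j = sum_list (map (\<lambda>B. if j \<in> B then 1 else 0) xs)"
  by (induction xs) auto

lemma length_as_sum: "length xs = sum_list (map (\<lambda>B. 1::nat) xs)"
  by (induction xs) auto

lemma bags_sub:
  assumes "\<forall>j. cnt xs j = (if j < n then 1 else 0)" "B \<in> set xs"
  shows "B \<subseteq> {..<n}"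
proof
  fix j assume "j \<in> B"
  then have "cnt xs j > 0" using assms(2) cnt_pos_iff by blast
  then show "j \<in> {..<n}" using assms(1) by (simp split: if_splits)
qed

locale rebal =
  fixes p :: "nat \<Rightarrow> real" and n m :: nat and M M1 M' :: "nat \<Rightarrow> nat set list"
    and imin kmin imax :: nat and A' C res :: "nat set list"
  assumes cntM: "\<forall>j. cnt (allbags m M) j = (if j < n then 1 else 0)"
    and pnn: "\<forall>j<n. 0 \<le> p j"
    and imin: "imin < m" and kmin: "kmin < length (M imin)" and imax: "imax < m"
    and A'_def: "A' = take kmin (M imin) @ drop (Suc kmin) (M imin)"
    and M1_def: "M1 = M(imin := A')"
    and C_def: "C = M1 imax @ [M imin ! kmin]"
    and lptC: "lpt p (\<Union>(set C)) (length C) res"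
    and M'_def: "M' = M1(imax := res)"
begin

definition "Bmin = M imin ! kmin"

lemma subM: "B \<in> set (allbags m M) \<Longrightarrow> B \<subseteq> {..<n}"
  using bags_sub[OF cntM] by blast

lemma setMi: "i < m \<Longrightarrow> set (M i) \<subseteq> set (allbags m M)"
  by (auto simp: set_allbags)

lemma setA': "set A' \<subseteq> set (M imin)"
  unfolding A'_def using set_take_subset set_drop_subset by fastforce

lemma setM1: "set (M1 i) \<subseteq> set (M i)"
  unfolding M1_def using setA' by auto

lemma Bmin_in: "Bmin \<in> set (M imin)"
  unfolding Bmin_def using kmin by simp

lemma setC: "set C \<subseteq> set (allbags m M)"
  unfolding C_def using setM1[of imax] setMi[OF imax] Bmin_in setMi[OF imin] Bmin_def by auto

lemma subC: "B \<in> set C \<Longrightarrow> B \<subseteq> {..<n}"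
  using setC subM by blast

lemma sumM1:
  fixes f :: "nat set \<Rightarrow> 'a::cancel_comm_monoid_add"
  shows "(\<Sum>i<m. sum_list (map f (M1 i))) + f Bmin = (\<Sum>i<m. sum_list (map f (M i)))"
proof -
  define X where "X = (\<Sum>i<m. sum_list (map f (M1 i)))"
  define Y where "Y = (\<Sum>i<m. sum_list (map f (M i)))"
  define a where "a = sum_list (map f A')"
  define c where "c = sum_list (map f (M imin))"
  have h1: "X + c = Y + a"
    unfolding X_def Y_def a_def c_def M1_def by (rule sum_upd[OF imin])
  have h2: "a + f Bmin = c"
    unfolding A'_def Bmin_def a_def c_def by (rule remove_nth_sum[OF kmin])
  have "(X + f Bmin) + a = X + (a + f Bmin)" by (simp add: ac_simps)
  also have "\<dots> = X + c" using h2 by simp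
  also have "\<dots> = Y + a" using h1 by simp
  finally have "X + f Bmin = Y" by simp
  then show ?thesis unfolding X_def Y_def .
qed


lemma sumM':
  fixes f :: "nat set \<Rightarrow> 'a::cancel_comm_monoid_add"
  shows "(\<Sum>i<m. sum_list (map f (M' i))) + sum_list (map f C) = (\<Sum>i<m. sum_list (map f (M i))) + sum_list (map f res)"
proof -
  have h1: "(\<Sum>i<m. sum_list (map f (M' i))) + sum_list (map f (M1 imax)) =
        (\<Sum>i<m. sum_list (map f (M1 i))) + sum_list (map f res)"
    unfolding M'_def by (rule sum_upd[OF imax])
  have "sum_list (map f C) = sum_list (map f (M1 imax)) + f Bmin" unfolding C_def Bmin_def by simp
  then have "(\<Sum>i<m. sum_list (map f (M' i))) + sum_list (map f C) =
     ((\<Sum>i<m. sum_list (map f (M' i))) + sum_list (map f (M1 imax))) + f Bmin" by (simp add: ac_simps)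
  also have "\<dots> = ((\<Sum>i<m. sum_list (map f (M1 i))) + f Bmin) + sum_list (map f res)"
    using h1 by (simp add: ac_simps)
  also have "\<dots> = (\<Sum>i<m. sum_list (map f (M i))) + sum_list (map f res)" using sumM1 by simp
  finally show ?thesis .
qed

lemma cntC_le: "cnt C j \<le> 1"
proof -
  let ?f = "\<lambda>B. if j \<in> B then 1 else (0::nat)"
  have e: "(\<Sum>i<m. cnt (M1 i) j) + ?f Bmin = cnt (allbags m M) j"
    using sumM1[of ?f] by (simp add: cnt_as_sum[symmetric] cnt_allbags)
  have "cnt (M1 imax) j \<le> (\<Sum>i<m. cnt (M1 i) j)"
    by (rule member_le_sum) (use imax in auto)
  moreover have "cnt C j = cnt (M1 imax) j + ?f Bmin" unfolding C_def Bmin_def by simp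
  moreover have "cnt (allbags m M) j \<le> 1" using cntM by simp
  ultimately show ?thesis using e by linarith
qed

lemma lpt_facts: "length res = length C \<and> (\<forall>j. cnt res j = cnt C j) \<and> (\<forall>B\<in>set res. B \<subseteq> {..<n}) \<and> Bal p res"
proof -
  obtain js where js: "distinct js" "set js = \<Union>(set C)" "sorted_wrt (\<lambda>a b. p b \<le> p a) js"
    "lpt_run p js (replicate (length C) {}) res"
    using lptC unfolding lpt_def by blast
  have b: "length res = length (replicate (length C) ({}::nat set)) \<and>
    (\<forall>x. cnt res x = cnt (replicate (length C) {}) x + (if x \<in> set js then 1 else 0)) \<and>
    (\<forall>B\<in>set res. B \<subseteq> \<Union>(set (replicate (length C) {})) \<union> set js)"
    by (rule lpt_basic[OF js(4) js(1)]) simp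
  have cr0: "cnt (replicate l {}) x = 0" for l x by (induction l) auto
  have UC: "\<Union>(set C) \<subseteq> {..<n}"
  proof
    fix x assume "x \<in> \<Union>(set C)"
    then obtain B where "B \<in> set C" "x \<in> B" by blast
    then show "x \<in> {..<n}" using subC[of B] by blast
  qed
  have cnteq: "cnt res j = cnt C j" for j
  proof (cases "j \<in> \<Union>(set C)")
    case True
    then have "cnt C j > 0" by (subst cnt_pos_iff) blast
    then have "cnt C j = 1" using cntC_le[of j] by linarith
    have "cnt res j = cnt (replicate (length C) {}) j + (if j \<in> set js then 1 else 0)" using b by blast
    then show ?thesis using True js(2) cr0 \<open>cnt C j = 1\<close> by simp
  next
    case False
    then have "\<not> cnt C j > 0" by (subst cnt_pos_iff) blast
    then have "cnt C j = 0" by simp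
    have "cnt res j = cnt (replicate (length C) {}) j + (if j \<in> set js then 1 else 0)" using b by blast
    then show ?thesis using False js(2) cr0 \<open>cnt C j = 0\<close> by simp
  qed
  have sub: "\<forall>B\<in>set res. B \<subseteq> {..<n}"
  proof
    fix B assume "B \<in> set res"
    then have "B \<subseteq> \<Union>(set (replicate (length C) {})) \<union> set js" using b by blast
    moreover have "\<Union>(set (replicate (length C) ({}::nat set))) = {}" by (simp add: set_replicate_conv_if)
    ultimately show "B \<subseteq> {..<n}" using UC js(2) by blast
  qed
  have bal: "Bal p res"
  proof (rule lpt_bal[OF js(4) js(1) js(3)])
    show "\<forall>j\<in>set js. 0 \<le> p j" using UC js(2) pnn by auto
  qed (auto simp: Bal_def)
  have "length res = length C" using b by simp
  then show ?thesis using cnteq sub bal by blast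
qed

lemma cnt_M': "cnt (allbags m M') j = cnt (allbags m M) j"
proof -
  let ?f = "\<lambda>B. if j \<in> B then 1 else (0::nat)"
  have "(\<Sum>i<m. cnt (M' i) j) + cnt C j = (\<Sum>i<m. cnt (M i) j) + cnt res j"
    using sumM'[of ?f] by (simp add: cnt_as_sum[symmetric])
  then show ?thesis using lpt_facts by (simp add: cnt_allbags)
qed

lemma length_M': "length (allbags m M') = length (allbags m M)"
proof -
  have "(\<Sum>i<m. length (M' i)) + length C = (\<Sum>i<m. length (M i)) + length res"
    using sumM'[of "\<lambda>B. 1::nat"] unfolding length_as_sum[symmetric] .
  then show ?thesis using lpt_facts by (simp add: length_allbags)
qed

lemma sum_res: "sum_list (map (bagp p) res) = sum_list (map (bagp p) C)"
proof -
  have "sum_list (map (bagp p) res) = (\<Sum>j<n. p j * real (cnt res j))"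
    using lpt_facts by (intro sumbag) auto
  also have "\<dots> = (\<Sum>j<n. p j * real (cnt C j))" using lpt_facts by simp
  also have "\<dots> = sum_list (map (bagp p) C)" using subC by (intro sumbag[symmetric]) auto
  finally show ?thesis .
qed

end

definition muM :: "(nat \<Rightarrow> real) \<Rightarrow> nat \<Rightarrow> (nat \<Rightarrow> nat set list) \<Rightarrow> real" where
  "muM p m M = Min (bagp p ` set (allbags m M))"

definition Ld :: "(nat \<Rightarrow> real) \<Rightarrow> (nat \<Rightarrow> nat set list) \<Rightarrow> nat \<Rightarrow> real" where
  "Ld p M i = sum_list (map (bagp p) (M i))"

definition Inv :: "nat \<Rightarrow> nat \<Rightarrow> (nat \<Rightarrow> real) \<Rightarrow> (nat \<Rightarrow> real) \<Rightarrow> real \<Rightarrow> real \<Rightarrow> (nat \<Rightarrow> nat set list) \<Rightarrow> bool" where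
  "Inv n m p shat oc T M \<longleftrightarrow>
    (\<forall>j. cnt (allbags m M) j = (if j < n then 1 else 0)) \<and>
    length (allbags m M) = m \<and>
    fits p shat m T M \<and>
    (\<forall>i<m. M i \<noteq> [] \<longrightarrow> Ld p M i \<le> oc * shat i + real (length (M i) - 1) * muM p m M) \<and>
    (\<forall>i<m. length (M i) \<le> 1 \<or> (\<forall>X\<in>set (M i). 2 \<le> card X \<longrightarrow> (\<forall>Z\<in>set (M i). bagp p X \<le> 2 * bagp p Z)))"

lemma sum_list_const: "sum_list (map (\<lambda>_. c) xs) = real (length xs) * (c::real)"
  by (induction xs) (auto simp: algebra_simps)

lemma sum_list_2: "sum_list (map (\<lambda>x. 2 * f x) xs) = 2 * sum_list (map f xs :: real list)"
  by (induction xs) (auto simp: algebra_simps)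

lemma sum_list_nonneg': "(\<And>x. x \<in> set xs \<Longrightarrow> 0 \<le> f x) \<Longrightarrow> 0 \<le> sum_list (map f xs :: real list)"
  by (induction xs) auto

locale invctx =
  fixes n m :: nat and p shat :: "nat \<Rightarrow> real" and oc T :: real
  assumes m1: "1 \<le> m" and pnn: "\<forall>j<n. 0 \<le> p j"
begin

lemma sub_of_inv: "Inv n m p shat oc T M \<Longrightarrow> B \<in> set (allbags m M) \<Longrightarrow> B \<subseteq> {..<n}"
  unfolding Inv_def using bags_sub by blast

lemma bagp_nn: "Inv n m p shat oc T M \<Longrightarrow> B \<in> set (allbags m M) \<Longrightarrow> 0 \<le> bagp p B"
  using sub_of_inv pnn by (intro bagp_nonneg) blast

lemma ne_of_inv: "Inv n m p shat oc T M \<Longrightarrow> set (allbags m M) \<noteq> {}"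
  unfolding Inv_def using m1 by auto

lemma mu_le: "Inv n m p shat oc T M \<Longrightarrow> B \<in> set (allbags m M) \<Longrightarrow> muM p m M \<le> bagp p B"
  unfolding muM_def by (rule Min_le) auto

lemma mu_in: "Inv n m p shat oc T M \<Longrightarrow> muM p m M \<in> bagp p ` set (allbags m M)"
  unfolding muM_def using ne_of_inv by (intro Min_in) auto

lemma mu_nn: "Inv n m p shat oc T M \<Longrightarrow> 0 \<le> muM p m M"
  using mu_in bagp_nn by fastforce

lemma Ld_nn: "Inv n m p shat oc T M \<Longrightarrow> i < m \<Longrightarrow> 0 \<le> Ld p M i"
  unfolding Ld_def by (rule sum_list_nonneg') (use bagp_nn set_allbags in blast)

end

lemma rebal_unfold:
  assumes "lpt_rebalance p m M M'"
  obtains imin kmin imax kmax res where "imin < m" "kmin < length (M imin)"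
    "\<forall>b\<in>set (allbags m M). bagp p (M imin ! kmin) \<le> bagp p b"
    "imax < m" "kmax < length (M imax)" "2 \<le> card (M imax ! kmax)"
    "\<forall>b\<in>set (allbags m M). 2 \<le> card b \<longrightarrow> bagp p b \<le> bagp p (M imax ! kmax)"
    "lpt p (\<Union>(set ((M(imin := take kmin (M imin) @ drop (Suc kmin) (M imin))) imax @ [M imin ! kmin])))
        (length ((M(imin := take kmin (M imin) @ drop (Suc kmin) (M imin))) imax @ [M imin ! kmin])) res"
    "M' = (M(imin := take kmin (M imin) @ drop (Suc kmin) (M imin)))(imax := res)"
  using assms unfolding lpt_rebalance_def Let_def by blast

context invctx
begin

lemma step:
  assumes I: "Inv n m p shat oc T M" and cc: "continue_cond p 4 m M"
    and rb: "lpt_rebalance p m M M'" and ft: "fits p shat m T M'"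
  shows "Inv n m p shat oc T M' \<and> muM p m M \<le> muM p m M'"
proof -
  obtain imin kmin imax kmax res where
    imin: "imin < m" and kmin: "kmin < length (M imin)"
    and minb: "\<forall>b\<in>set (allbags m M). bagp p (M imin ! kmin) \<le> bagp p b"
    and imax: "imax < m" and kmax: "kmax < length (M imax)" and c2: "2 \<le> card (M imax ! kmax)"
    and maxb: "\<forall>b\<in>set (allbags m M). 2 \<le> card b \<longrightarrow> bagp p b \<le> bagp p (M imax ! kmax)"
    and lptC: "lpt p (\<Union>(set ((M(imin := take kmin (M imin) @ drop (Suc kmin) (M imin))) imax @ [M imin ! kmin])))
        (length ((M(imin := take kmin (M imin) @ drop (Suc kmin) (M imin))) imax @ [M imin ! kmin])) res"
    and M'eq: "M' = (M(imin := take kmin (M imin) @ drop (Suc kmin) (M imin)))(imax := res)"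
    using rebal_unfold[OF rb] by blast
  define A' where "A' = take kmin (M imin) @ drop (Suc kmin) (M imin)"
  define M1 where "M1 = M(imin := A')"
  define C where "C = M1 imax @ [M imin ! kmin]"
  have cntM: "\<forall>j. cnt (allbags m M) j = (if j < n then 1 else 0)" using I unfolding Inv_def by blast
  interpret R: rebal p n m M M1 M' imin kmin imax A' C res
    by unfold_locales (use cntM pnn imin kmin imax lptC M'eq in \<open>simp_all add: A'_def M1_def C_def\<close>)
  define \<mu> where "\<mu> = muM p m M"
  define Bx where "Bx = M imax ! kmax"
  have mu0: "0 \<le> \<mu>" unfolding \<mu>_def using mu_nn[OF I] .
  have inM: "i < m \<Longrightarrow> B \<in> set (M i) \<Longrightarrow> B \<in> set (allbags m M)" for i B
    using R.setMi by blast
  have mu_le': "i < m \<Longrightarrow> B \<in> set (M i) \<Longrightarrow> \<mu> \<le> bagp p B" for i B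
    unfolding \<mu>_def using mu_le[OF I] inM by blast
  have Bmin_mu: "bagp p R.Bmin = \<mu>"
  proof -
    have "R.Bmin \<in> set (allbags m M)" using inM[OF imin R.Bmin_in] .
    moreover have "\<exists>B0\<in>set (allbags m M). bagp p B0 = \<mu>" using mu_in[OF I] unfolding \<mu>_def by (metis imageE)
    moreover obtain B0 where "B0 \<in> set (allbags m M)" "bagp p B0 = \<mu>" using calculation(2) by blast
    ultimately have "bagp p R.Bmin \<le> \<mu>" using minb unfolding R.Bmin_def by auto
    moreover have "\<mu> \<le> bagp p R.Bmin" using mu_le[OF I \<open>R.Bmin \<in> set (allbags m M)\<close>] unfolding \<mu>_def .
    ultimately show ?thesis by linarith
  qed
  have Bx_in: "Bx \<in> set (M imax)" unfolding Bx_def using kmax by simp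
  have Bx4: "4 * \<mu> < bagp p Bx"
  proof -
    obtain b where b: "b \<in> set (allbags m M)" "2 \<le> card b" "4 * Min (bagp p ` set (allbags m M)) < bagp p b"
      using cc unfolding continue_cond_def by blast
    then have "bagp p b \<le> bagp p Bx" using maxb unfolding Bx_def by blast
    then show ?thesis using b(3) unfolding \<mu>_def muM_def by linarith
  qed
  have balM: "length (M i) \<le> 1 \<or> (\<forall>X\<in>set (M i). 2 \<le> card X \<longrightarrow> (\<forall>Z\<in>set (M i). bagp p X \<le> 2 * bagp p Z))"
    if "i < m" for i using I that unfolding Inv_def by blast
  have big: "2 * \<mu> \<le> bagp p X" if X: "X \<in> set (M1 imax)" for X
  proof -
    have XM: "X \<in> set (M imax)" using R.setM1 X by blast
    show ?thesis
    proof (cases "length (M imax) \<le> 1")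
      case True
      then have "kmax = 0" using kmax by simp
      have "length (M imax) = 1" using True kmax by simp
      then obtain a where "M imax = [a]" by (cases "M imax") auto
      then have "M imax = [Bx]" unfolding Bx_def \<open>kmax = 0\<close> by simp
      then have "X = Bx" using XM by simp
      then show ?thesis using Bx4 mu0 by simp
    next
      case False
      then have "\<forall>X\<in>set (M imax). 2 \<le> card X \<longrightarrow> (\<forall>Z\<in>set (M imax). bagp p X \<le> 2 * bagp p Z)"
        using balM[OF imax] by blast
      then have "bagp p Bx \<le> 2 * bagp p X" using Bx_in c2 XM unfolding Bx_def by blast
      then show ?thesis using Bx4 by linarith
    qed
  qed
  have lf: "length res = length C \<and> (\<forall>j. cnt res j = cnt C j) \<and> (\<forall>B\<in>set res. B \<subseteq> {..<n}) \<and> Bal p res"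
    by (rule R.lpt_facts)
  have res_mu: "\<forall>z<length C. \<mu> \<le> bagp p (res ! z)"
  proof (rule lpt_min[where res = res and C = C and l = "length C"])
    show "length res = length C" using lf by simp
    show "\<forall>j. cnt C j \<le> 1" using R.cntC_le by blast
    show "\<forall>j. cnt res j = cnt C j" using lf by blast
    show "\<forall>B\<in>set C. finite B" using R.subC finite_subset by blast
    show "\<forall>B\<in>set res. finite B" using lf finite_subset by blast
    show "\<forall>B\<in>set C. \<forall>y\<in>B. 0 \<le> p y" using R.subC pnn by blast
    show "Bal p res" using lf by blast
    show "0 \<le> \<mu>" by (rule mu0)
    show "\<forall>y<length C. 2 * \<mu> - (if y = length C - 1 then \<mu> else 0) \<le> bagp p (C ! y)"
    proof (intro allI impI)
      fix y assume y: "y < length C"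
      show "2 * \<mu> - (if y = length C - 1 then \<mu> else 0) \<le> bagp p (C ! y)"
      proof (cases "y = length C - 1")
        case True
        then have "C ! y = R.Bmin" unfolding C_def R.Bmin_def by (simp add: nth_append)
        then show ?thesis using True Bmin_mu by simp
      next
        case False
        then have "y < length (M1 imax)" using y unfolding C_def by simp
        then have "C ! y \<in> set (M1 imax)" unfolding C_def by (simp add: nth_append)
        then show ?thesis using big False by simp
      qed
    qed
  qed simp
  have res_mu': "\<mu> \<le> bagp p B" if "B \<in> set res" for B
    using res_mu that lf by (metis in_set_conv_nth)
  have M'imax: "M' imax = res" unfolding R.M'_def by simp
  have M'other: "M' i = M1 i" if "i \<noteq> imax" for i unfolding R.M'_def using that by simp
  have M1other: "M1 i = M i" if "i \<noteq> imin" for i unfolding M1_def using that by simp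
  have M1imin: "M1 imin = A'" unfolding M1_def by simp
  have sumA': "sum_list (map (bagp p) A') + \<mu> = Ld p M imin"
    using remove_nth_sum[OF kmin, of "bagp p"] Bmin_mu unfolding A'_def Ld_def R.Bmin_def by simp
  have lenA': "length A' + 1 = length (M imin)" unfolding A'_def using kmin by simp
  have Ld_res: "Ld p M' imax = sum_list (map (bagp p) (M1 imax)) + \<mu>"
    unfolding Ld_def M'imax using R.sum_res Bmin_mu unfolding C_def R.Bmin_def by simp
  have len_res: "length (M' imax) = length (M1 imax) + 1"
    using lf M'imax unfolding C_def by simp
  have ne': "set (allbags m M') \<noteq> {}" using R.length_M' I m1 unfolding Inv_def by auto
  have mono: "\<mu> \<le> muM p m M'"
    unfolding muM_def
  proof (rule Min.boundedI)
    show "finite (bagp p ` set (allbags m M'))" by simp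
    show "bagp p ` set (allbags m M') \<noteq> {}" using ne' by simp
    fix a assume "a \<in> bagp p ` set (allbags m M')"
    then obtain B i where B: "B \<in> set (M' i)" "i < m" "a = bagp p B" by (auto simp: set_allbags)
    show "\<mu> \<le> a"
    proof (cases "i = imax")
      case True
      then show ?thesis using B res_mu' M'imax by simp
    next
      case False
      then have "B \<in> set (M1 i)" using B M'other by simp
      then have "B \<in> set (M i)" using R.setM1[of i] by blast
      then show ?thesis using B mu_le' by simp
    qed
  qed
  define \<mu>' where "\<mu>' = muM p m M'"
  have loadinv: "Ld p M' i \<le> oc * shat i + real (length (M' i) - 1) * \<mu>'" if im: "i < m" and ne: "M' i \<noteq> []" for i
  proof -
    have LI: "M i \<noteq> [] \<Longrightarrow> Ld p M i \<le> oc * shat i + real (length (M i) - 1) * \<mu>"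
      using I im unfolding Inv_def \<mu>_def by blast
    have mm: "\<mu> \<le> \<mu>'" unfolding \<mu>'_def using mono .
    show ?thesis
    proof (cases "i = imax")
      case True
      show ?thesis
      proof (cases "imin = imax")
        case True2: True
        have "Ld p M' i = Ld p M imax" using Ld_res sumA' True True2 M1imin by simp
        moreover have "length (M' i) = length (M imax)" using len_res lenA' True True2 M1imin by simp
        moreover have "M imax \<noteq> []" using kmax by auto
        moreover have "real (length (M imax) - 1) * \<mu> \<le> real (length (M imax) - 1) * \<mu>'"
          using mm by (intro mult_left_mono) auto
        ultimately show ?thesis using LI True by simp
      next
        case False2: False
        have "Ld p M' i = Ld p M imax + \<mu>" using Ld_res True False2 M1other unfolding Ld_def by simp
        moreover have "length (M' i) = length (M imax) + 1" using len_res True False2 M1other by simp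
        moreover have "M imax \<noteq> []" using kmax by auto
        moreover have "real (length (M imax) - 1) * \<mu> + \<mu> \<le> real (length (M imax) + 1 - 1) * \<mu>'"
        proof -
          have "real (length (M imax) - 1) * \<mu> + \<mu> = real (length (M imax)) * \<mu>"
            using kmax by (simp add: of_nat_diff algebra_simps)
          also have "\<dots> \<le> real (length (M imax)) * \<mu>'" using mm by (intro mult_left_mono) auto
          finally show ?thesis by simp
        qed
        ultimately show ?thesis using LI True by simp
      qed
    next
      case False
      show ?thesis
      proof (cases "i = imin")
        case True
        have eq: "M' i = A'" using False True M'other M1imin by simp
        then have "length (M imin) \<ge> 2" using ne lenA' by (cases A') auto
        have "Ld p M' i + \<mu> = Ld p M imin" using eq sumA' unfolding Ld_def by simp
        moreover have "length (M' i) + 1 = length (M imin)" using eq lenA' by simp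
        moreover have "M imin \<noteq> []" using kmin by auto
        moreover have "real (length (M imin) - 1) * \<mu> - \<mu> \<le> real (length (M' i) - 1) * \<mu>'"
        proof -
          have e1: "real (length (M imin) - 1) = real (length (M' i))"
            using \<open>length (M' i) + 1 = length (M imin)\<close> by simp
          have e2: "real (length (M' i) - 1) = real (length (M' i)) - 1"
            using \<open>length (M imin) \<ge> 2\<close> \<open>length (M' i) + 1 = length (M imin)\<close> by (simp add: of_nat_diff)
          have "real (length (M imin) - 1) * \<mu> - \<mu> = real (length (M' i) - 1) * \<mu>"
            unfolding e1 e2 by (simp add: algebra_simps)
          also have "\<dots> \<le> real (length (M' i) - 1) * \<mu>'" using mm by (intro mult_left_mono) auto
          finally show ?thesis .
        qed
        ultimately show ?thesis using LI True by simp
      next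
        case False3: False
        have eq: "M' i = M i" using False False3 M'other M1other by simp
        have "real (length (M i) - 1) * \<mu> \<le> real (length (M i) - 1) * \<mu>'"
          using mm by (intro mult_left_mono) auto
        then show ?thesis using LI eq ne unfolding Ld_def by simp
      qed
    qed
  qed
  have balinv: "length (M' i) \<le> 1 \<or> (\<forall>X\<in>set (M' i). 2 \<le> card X \<longrightarrow> (\<forall>Z\<in>set (M' i). bagp p X \<le> 2 * bagp p Z))"
    if im: "i < m" for i
  proof (cases "i = imax")
    case True
    have "\<forall>X\<in>set res. 2 \<le> card X \<longrightarrow> (\<forall>Z\<in>set res. bagp p X \<le> 2 * bagp p Z)"
    proof (intro ballI impI)
      fix X Z assume X: "X \<in> set res" and cX: "2 \<le> card X" and Z: "Z \<in> set res"
      obtain x where x: "x < length res" "X = res ! x" using X by (metis in_set_conv_nth)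
      obtain z where z: "z < length res" "Z = res ! z" using Z by (metis in_set_conv_nth)
      show "bagp p X \<le> 2 * bagp p Z" using lf x z cX unfolding Bal_def by blast
    qed
    then show ?thesis using True M'imax by simp
  next
    case False
    show ?thesis
    proof (cases "i = imin")
      case True
      have eq: "M' i = A'" using False True M'other M1imin by simp
      show ?thesis
      proof (cases "length (M imin) \<le> 1")
        case True
        then show ?thesis using eq lenA' by simp
      next
        case False
        then have "\<forall>X\<in>set (M imin). 2 \<le> card X \<longrightarrow> (\<forall>Z\<in>set (M imin). bagp p X \<le> 2 * bagp p Z)"
          using balM[OF imin] by blast
        then show ?thesis using eq R.setA' by blast
      qed
    next
      case False3: False
      have eq: "M' i = M i" using False False3 M'other M1other by simp
      then show ?thesis using balM[OF im] by simp
    qed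
  qed
  have "Inv n m p shat oc T M'"
    unfolding Inv_def
  proof (intro conjI)
    show "\<forall>j. cnt (allbags m M') j = (if j < n then 1 else 0)" using R.cnt_M' cntM by simp
    show "length (allbags m M') = m" using R.length_M' I unfolding Inv_def by simp
    show "fits p shat m T M'" by (rule ft)
    show "\<forall>i<m. M' i \<noteq> [] \<longrightarrow> Ld p M' i \<le> oc * shat i + real (length (M' i) - 1) * muM p m M'"
      using loadinv unfolding \<mu>'_def by blast
    show "\<forall>i<m. length (M' i) \<le> 1 \<or> (\<forall>X\<in>set (M' i). 2 \<le> card X \<longrightarrow> (\<forall>Z\<in>set (M' i). bagp p X \<le> 2 * bagp p Z))"
      using balinv by blast
  qed
  then show ?thesis using mono unfolding \<mu>_def by blast
qed

end

lemma arith1: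
  fixes \<alpha> K L \<mu> N Bx :: real
  assumes a0: "\<alpha> > 0" and N1: "N \<ge> 1" and h0: "L + \<mu> > (1 + \<alpha>) * K" and h1: "L \<le> K + (N - 1) * \<mu>"
    and h2: "N * Bx \<le> 2 * L" and h3: "L \<le> (1 + \<alpha>) * K"
  shows "Bx \<le> (2 + 2 / \<alpha>) * \<mu>"
proof -
  have aK: "\<alpha> * K < N * \<mu>" using h0 h1 by (simp add: algebra_simps)
  have NB: "N * Bx \<le> 2 * (1 + \<alpha>) * K" using h2 h3 by (simp add: algebra_simps)
  have "N * (\<alpha> * Bx) = \<alpha> * (N * Bx)" by (simp add: algebra_simps)
  also have "\<dots> \<le> \<alpha> * (2 * (1 + \<alpha>) * K)" using NB a0 by (intro mult_left_mono) auto
  also have "\<dots> = 2 * (1 + \<alpha>) * (\<alpha> * K)" by (simp add: algebra_simps)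
  also have "\<dots> \<le> 2 * (1 + \<alpha>) * (N * \<mu>)" using aK a0 by (intro mult_left_mono) auto
  also have "\<dots> = N * (2 * (1 + \<alpha>) * \<mu>)" by (simp add: algebra_simps)
  finally have "\<alpha> * Bx \<le> 2 * (1 + \<alpha>) * \<mu>" using N1 by (simp add: mult_le_cancel_left_pos)
  then have "Bx \<le> 2 * (1 + \<alpha>) * \<mu> / \<alpha>" using a0 by (simp add: pos_le_divide_eq mult.commute)
  also have "2 * (1 + \<alpha>) * \<mu> / \<alpha> = (2 + 2 / \<alpha>) * \<mu>" using a0 by (simp add: field_simps)
  finally show ?thesis .
qed

context invctx
begin

lemma reject_bound:
  assumes I: "Inv n m p shat oc T M" and cc: "continue_cond p 4 m M"
    and rb: "lpt_rebalance p m M M'" and nf: "\<not> fits p shat m T M'"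
    and Tdef: "T = (1 + \<alpha>) * oc" and a0: "0 < \<alpha>"
  shows "\<forall>B\<in>set (allbags m M). 2 \<le> card B \<longrightarrow> bagp p B \<le> (2 + 2 / \<alpha>) * muM p m M"
proof -
  obtain imin kmin imax kmax res where
    imin: "imin < m" and kmin: "kmin < length (M imin)"
    and minb: "\<forall>b\<in>set (allbags m M). bagp p (M imin ! kmin) \<le> bagp p b"
    and imax: "imax < m" and kmax: "kmax < length (M imax)" and c2: "2 \<le> card (M imax ! kmax)"
    and maxb: "\<forall>b\<in>set (allbags m M). 2 \<le> card b \<longrightarrow> bagp p b \<le> bagp p (M imax ! kmax)"
    and lptC: "lpt p (\<Union>(set ((M(imin := take kmin (M imin) @ drop (Suc kmin) (M imin))) imax @ [M imin ! kmin])))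
        (length ((M(imin := take kmin (M imin) @ drop (Suc kmin) (M imin))) imax @ [M imin ! kmin])) res"
    and M'eq: "M' = (M(imin := take kmin (M imin) @ drop (Suc kmin) (M imin)))(imax := res)"
    using rebal_unfold[OF rb] by blast
  define A' where "A' = take kmin (M imin) @ drop (Suc kmin) (M imin)"
  define M1 where "M1 = M(imin := A')"
  define C where "C = M1 imax @ [M imin ! kmin]"
  have cntM: "\<forall>j. cnt (allbags m M) j = (if j < n then 1 else 0)" using I unfolding Inv_def by blast
  interpret R: rebal p n m M M1 M' imin kmin imax A' C res
    by unfold_locales (use cntM pnn imin kmin imax lptC M'eq in \<open>simp_all add: A'_def M1_def C_def\<close>)
  define \<mu> where "\<mu> = muM p m M"
  define Bx where "Bx = M imax ! kmax"
  have mu0: "0 \<le> \<mu>" unfolding \<mu>_def using mu_nn[OF I] .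
  have inM: "i < m \<Longrightarrow> B \<in> set (M i) \<Longrightarrow> B \<in> set (allbags m M)" for i B
    using R.setMi by blast
  have Bmin_mu: "bagp p R.Bmin = \<mu>"
  proof -
    have "R.Bmin \<in> set (allbags m M)" using inM[OF imin R.Bmin_in] .
    moreover have "\<exists>B0\<in>set (allbags m M). bagp p B0 = \<mu>" using mu_in[OF I] unfolding \<mu>_def by (metis imageE)
    moreover obtain B0 where "B0 \<in> set (allbags m M)" "bagp p B0 = \<mu>" using calculation(2) by blast
    ultimately have "bagp p R.Bmin \<le> \<mu>" using minb unfolding R.Bmin_def by auto
    moreover have "\<mu> \<le> bagp p R.Bmin" using mu_le[OF I \<open>R.Bmin \<in> set (allbags m M)\<close>] unfolding \<mu>_def .
    ultimately show ?thesis by linarith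
  qed
  have Bx_in: "Bx \<in> set (M imax)" unfolding Bx_def using kmax by simp
  have balM: "length (M i) \<le> 1 \<or> (\<forall>X\<in>set (M i). 2 \<le> card X \<longrightarrow> (\<forall>Z\<in>set (M i). bagp p X \<le> 2 * bagp p Z))"
    if "i < m" for i using I that unfolding Inv_def by blast
  have M'imax: "M' imax = res" unfolding R.M'_def by simp
  have M'other: "M' i = M1 i" if "i \<noteq> imax" for i unfolding R.M'_def using that by simp
  have M1other: "M1 i = M i" if "i \<noteq> imin" for i unfolding M1_def using that by simp
  have M1imin: "M1 imin = A'" unfolding M1_def by simp
  have sumA': "sum_list (map (bagp p) A') + \<mu> = Ld p M imin"
    using remove_nth_sum[OF kmin, of "bagp p"] Bmin_mu unfolding A'_def Ld_def R.Bmin_def by simp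
  have Ld_res: "Ld p M' imax = sum_list (map (bagp p) (M1 imax)) + \<mu>"
    unfolding Ld_def M'imax using R.sum_res Bmin_mu unfolding C_def R.Bmin_def by simp
  have fitsM: "\<forall>i<m. Ld p M i \<le> T * shat i" using I unfolding Inv_def fits_def Ld_def by blast
  obtain i where im: "i < m" and bad: "\<not> Ld p M' i \<le> T * shat i"
    using nf unfolding fits_def Ld_def by blast
  have key: "imin \<noteq> imax \<and> Ld p M imax + \<mu> > T * shat imax"
  proof (cases "i = imax")
    case True
    show ?thesis
    proof (cases "imin = imax")
      case True2: True
      have "Ld p M' i = Ld p M imax" using Ld_res sumA' True True2 M1imin by simp
      then show ?thesis using bad fitsM imax True by auto
    next
      case False2: False
      have "Ld p M' i = Ld p M imax + \<mu>" using Ld_res True False2 M1other unfolding Ld_def by simp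
      then show ?thesis using bad True False2 by auto
    qed
  next
    case False
    show ?thesis
    proof (cases "i = imin")
      case True
      have "M' i = A'" using False True M'other M1imin by simp
      then have "Ld p M' i + \<mu> = Ld p M imin" using sumA' unfolding Ld_def by simp
      then show ?thesis using bad fitsM imin True mu0 by force
    next
      case False3: False
      have "M' i = M i" using False False3 M'other M1other by simp
      then show ?thesis using bad fitsM im unfolding Ld_def by auto
    qed
  qed
  define N where "N = length (M imax)"
  have N1: "N \<ge> 1" unfolding N_def using kmax by simp
  have LI: "Ld p M imax \<le> oc * shat imax + real (N - 1) * \<mu>"
  proof -
    have "M imax \<noteq> []" using kmax by auto
    then show ?thesis using I imax unfolding Inv_def \<mu>_def N_def by blast
  qed
  have NBx: "real N * bagp p Bx \<le> 2 * Ld p M imax"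
  proof (cases "N \<le> 1")
    case True
    then have "length (M imax) = 1" using N1 unfolding N_def by simp
    then obtain a where "M imax = [a]" by (cases "M imax") auto
    moreover have "kmax = 0" using kmax \<open>length (M imax) = 1\<close> by simp
    ultimately have "M imax = [Bx]" unfolding Bx_def by simp
    moreover have "0 \<le> bagp p Bx" using bagp_nn[OF I] inM[OF imax Bx_in] .
    ultimately show ?thesis using True N1 unfolding N_def Ld_def by simp
  next
    case False
    then have "\<forall>X\<in>set (M imax). 2 \<le> card X \<longrightarrow> (\<forall>Z\<in>set (M imax). bagp p X \<le> 2 * bagp p Z)"
      using balM[OF imax] unfolding N_def by auto
    then have "\<forall>Z\<in>set (M imax). bagp p Bx \<le> 2 * bagp p Z" using Bx_in c2 unfolding Bx_def by blast
    then have "sum_list (map (\<lambda>_. bagp p Bx) (M imax)) \<le> sum_list (map (\<lambda>Z. 2 * bagp p Z) (M imax))"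
      by (intro sum_list_mono) auto
    then show ?thesis unfolding sum_list_const sum_list_2 Ld_def N_def by simp
  qed
  have NR: "real (N - 1) = real N - 1" using N1 by (simp add: of_nat_diff)
  have "bagp p Bx \<le> (2 + 2 / \<alpha>) * \<mu>"
  proof (rule arith1[OF a0])
    show "1 \<le> real N" using N1 by simp
    show "(1 + \<alpha>) * (oc * shat imax) < Ld p M imax + \<mu>" using key Tdef by (simp add: mult.assoc)
    show "Ld p M imax \<le> oc * shat imax + (real N - 1) * \<mu>" using LI NR by simp
    show "real N * bagp p Bx \<le> 2 * Ld p M imax" by (rule NBx)
    show "Ld p M imax \<le> (1 + \<alpha>) * (oc * shat imax)" using fitsM imax Tdef by (simp add: mult.assoc)
  qed
  then show ?thesis using maxb unfolding Bx_def \<mu>_def by fastforce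
qed

lemma loop:
  assumes "ipr_loop p shat m 4 T M R"
  shows "Inv n m p shat oc T M \<Longrightarrow> Inv n m p shat oc T R \<and>
    (\<not> continue_cond p 4 m R \<or> (\<exists>M'. continue_cond p 4 m R \<and> lpt_rebalance p m R M' \<and> \<not> fits p shat m T M'))"
  using assms
proof (induction rule: ipr_loop.induct)
  case (loop_stop M)
  then show ?case by blast
next
  case (loop_reject M M')
  then show ?case by blast
next
  case (loop_accept M M' R)
  have "Inv n m p shat oc T M'" using step[OF loop_accept.prems loop_accept.hyps(1,2,3)] by blast
  then show ?case using loop_accept.IH by blast
qed

lemma final_multi:
  assumes I: "Inv n m p shat oc T R"
    and st: "\<not> continue_cond p 4 m R \<or> (\<exists>M'. continue_cond p 4 m R \<and> lpt_rebalance p m R M' \<and> \<not> fits p shat m T M')"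
    and Tdef: "T = (1 + \<alpha>) * oc" and a0: "0 < \<alpha>" and a1: "\<alpha> < 1"
  shows "\<forall>B\<in>set (allbags m R). 2 \<le> card B \<longrightarrow> bagp p B \<le> (2 + 2 / \<alpha>) * muM p m R"
  using st
proof
  assume nc: "\<not> continue_cond p 4 m R"
  have c4: "4 \<le> 2 + 2 / \<alpha>" using a0 a1 by (simp add: field_simps)
  have mu0: "0 \<le> muM p m R" using mu_nn[OF I] .
  show ?thesis
  proof (intro ballI impI)
    fix B assume B: "B \<in> set (allbags m R)" and c: "2 \<le> card B"
    have "bagp p B \<le> 4 * muM p m R" using nc B c unfolding continue_cond_def muM_def by force
    also have "\<dots> \<le> (2 + 2 / \<alpha>) * muM p m R" using c4 mu0 by (intro mult_right_mono) auto
    finally show "bagp p B \<le> (2 + 2 / \<alpha>) * muM p m R" .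
  qed
next
  assume "\<exists>M'. continue_cond p 4 m R \<and> lpt_rebalance p m R M' \<and> \<not> fits p shat m T M'"
  then obtain M' where "continue_cond p 4 m R" "lpt_rebalance p m R M'" "\<not> fits p shat m T M'" by blast
  then show ?thesis using reject_bound[OF I _ _ _ Tdef a0] by blast
qed

end

lemma concat_assign:
  fixes f :: "nat set \<Rightarrow> real"
  shows "\<exists>g. (\<forall>k<length (allbags m M). g k < m) \<and>
    (\<forall>i<m. sum (\<lambda>k. f (allbags m M ! k)) {k. k < length (allbags m M) \<and> g k = i} = sum_list (map f (M i)))"
proof (induction m)
  case 0
  then show ?case by simp
next
  case (Suc m)
  then obtain g where g1: "\<forall>k<length (allbags m M). g k < m"
    and g2: "\<forall>i<m. sum (\<lambda>k. f (allbags m M ! k)) {k. k < length (allbags m M) \<and> g k = i} = sum_list (map f (M i))"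
    by blast
  define xs where "xs = allbags m M"
  define ys where "ys = M m"
  define g' where "g' k = (if k < length xs then g k else m)" for k
  have ab: "allbags (Suc m) M = xs @ ys" unfolding xs_def ys_def by simp
  have "\<forall>k<length (xs @ ys). g' k < Suc m" using g1 unfolding g'_def xs_def by auto
  moreover have "\<forall>i<Suc m. sum (\<lambda>k. f ((xs @ ys) ! k)) {k. k < length (xs @ ys) \<and> g' k = i} = sum_list (map f (M i))"
  proof (intro allI impI)
    fix i assume i: "i < Suc m"
    show "sum (\<lambda>k. f ((xs @ ys) ! k)) {k. k < length (xs @ ys) \<and> g' k = i} = sum_list (map f (M i))"
    proof (cases "i < m")
      case True
      have "{k. k < length (xs @ ys) \<and> g' k = i} = {k. k < length xs \<and> g k = i}"
        using True unfolding g'_def by auto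
      moreover have "sum (\<lambda>k. f ((xs @ ys) ! k)) {k. k < length xs \<and> g k = i} = sum (\<lambda>k. f (xs ! k)) {k. k < length xs \<and> g k = i}"
        by (intro sum.cong) (auto simp: nth_append)
      ultimately show ?thesis using g2 True unfolding xs_def by simp
    next
      case False
      then have im: "i = m" using i by simp
      have eqv: "(k < length (xs @ ys) \<and> g' k = m) \<longleftrightarrow> (length xs \<le> k \<and> k < length xs + length ys)" for k
      proof (cases "k < length xs")
        case True
        then have "g' k = g k" "g k < m" using g1 unfolding g'_def xs_def by auto
        then show ?thesis using True by auto
      next
        case False
        then show ?thesis unfolding g'_def by auto
      qed
      have "{k. k < length (xs @ ys) \<and> g' k = i} = {length xs..<length xs + length ys}"
        unfolding im by (rule set_eqI) (simp only: mem_Collect_eq atLeastLessThan_iff eqv)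
      then have "sum (\<lambda>k. f ((xs @ ys) ! k)) {k. k < length (xs @ ys) \<and> g' k = i}
          = sum (\<lambda>k. f ((xs @ ys) ! k)) {length xs..<length xs + length ys}" by simp
      also have "\<dots> = sum (\<lambda>t. f ((xs @ ys) ! (t + length xs))) {0..<length ys}"
        by (subst sum.shift_bounds_nat_ivl[symmetric]) (simp add: add.commute)
      also have "\<dots> = sum (\<lambda>t. f (ys ! t)) {0..<length ys}"
        by (intro sum.cong) (auto simp: nth_append)
      also have "\<dots> = sum_list (map f ys)"
        by (simp add: sum_list_sum_nth atLeast0LessThan)
      finally show ?thesis unfolding ys_def im .
    qed
  qed
  ultimately show ?case unfolding ab by blast
qed

lemma makespan_le:
  assumes "sched_ptas p s m \<delta> bags g" "\<forall>i<m. s i > 0" "m \<ge> 1"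
  shows "makespan (bag_sizes p bags) s (length bags) m g \<le> (1 + \<delta>) * opt (bag_sizes p bags) s (length bags) m"
  unfolding makespan_def
proof (rule Max.boundedI)
  show "finite ((\<lambda>i. load (bag_sizes p bags) (length bags) g i / s i) ` {..<m})" by simp
  have "0 \<in> {..<m}" using assms(3) by simp
  then show "(\<lambda>i. load (bag_sizes p bags) (length bags) g i / s i) ` {..<m} \<noteq> {}" by blast
  fix a assume "a \<in> (\<lambda>i. load (bag_sizes p bags) (length bags) g i / s i) ` {..<m}"
  then obtain i where i: "i < m" "a = load (bag_sizes p bags) (length bags) g i / s i" by auto
  have "load (bag_sizes p bags) (length bags) g i \<le> (1 + \<delta>) * opt (bag_sizes p bags) s (length bags) m * s i"
    using assms(1) i(1) unfolding sched_ptas_def feasible_within_def by blast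
  then show "a \<le> (1 + \<delta>) * opt (bag_sizes p bags) s (length bags) m"
    using i assms(2) by (simp add: pos_divide_le_eq)
qed

lemma init_inv:
  assumes m1: "1 \<le> m" and pnn: "\<forall>j<n. 0 \<le> p j" and sh: "\<forall>i<m. 0 \<le> shat i"
    and pp: "ptas_partition n m p shat \<delta> B" and a0: "0 < \<alpha>"
    and oc: "oc = optC m p shat B" and Tdef: "T = (1 + \<alpha>) * oc"
  shows "Inv n m p shat oc T (\<lambda>i. [B i])"
proof -
  have disj: "\<forall>i<m. \<forall>i'<m. i \<noteq> i' \<longrightarrow> B i \<inter> B i' = {}" and cov: "(\<Union>i<m. B i) = {..<n}"
    and cap: "\<forall>i<m. bagp p (B i) \<le> (1 + \<delta>) * opt p shat n m * shat i"
    using pp unfolding ptas_partition_def by blast+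
  have subB: "B i \<subseteq> {..<n}" if "i < m" for i using cov that by blast
  have bnn: "0 \<le> bagp p (B i)" if "i < m" for i using subB[OF that] pnn by (intro bagp_nonneg) auto
  have le: "bagp p (B i) \<le> oc * shat i" if im: "i < m" for i
  proof (cases "shat i = 0")
    case True
    then show ?thesis using cap[rule_format, OF im] by simp
  next
    case False
    then have sp: "shat i > 0" using sh im by (simp add: order_less_le)
    have "bagp p (B i) / shat i \<le> oc" unfolding oc optC_def by (rule Max_ge) (use im in auto)
    then show ?thesis using sp by (simp add: pos_divide_le_eq)
  qed
  have oc0: "0 \<le> oc"
  proof -
    have "bagp p (B 0) / shat 0 \<le> oc" unfolding oc optC_def by (rule Max_ge) (use m1 in auto)
    moreover have "0 \<le> bagp p (B 0) / shat 0" using bnn[of 0] sh m1 by simp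
    ultimately show ?thesis by linarith
  qed
  have cntB: "cnt (allbags m (\<lambda>i. [B i])) j = (if j < n then 1 else 0)" for j
  proof -
    have "cnt (allbags m (\<lambda>i. [B i])) j = (\<Sum>i<m. if j \<in> B i then 1 else 0)"
      by (simp add: cnt_allbags)
    also have "\<dots> = card {i. i < m \<and> j \<in> B i}"
      by (simp add: sum.If_cases Int_def)
    also have "\<dots> = (if j < n then 1 else 0)"
    proof (cases "j < n")
      case True
      then obtain i where i: "i < m" "j \<in> B i" using cov by blast
      have "{i. i < m \<and> j \<in> B i} = {i}" using i disj by blast
      then show ?thesis using True by simp
    next
      case False
      then have "{i. i < m \<and> j \<in> B i} = {}" using subB by blast
      then show ?thesis using False by simp
    qed
    finally show ?thesis .
  qed
  show ?thesis unfolding Inv_def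
  proof (intro conjI allI impI)
    show "cnt (allbags m (\<lambda>i. [B i])) j = (if j < n then 1 else 0)" for j by (rule cntB)
    show "length (allbags m (\<lambda>i. [B i])) = m" by (simp add: length_allbags)
    show "fits p shat m T (\<lambda>i. [B i])" unfolding fits_def
    proof (intro allI impI)
      fix i assume im: "i < m"
      have "oc * shat i \<le> T * shat i" unfolding Tdef using oc0 sh im a0
        by (intro mult_right_mono) (auto simp: algebra_simps)
      then show "sum_list (map (bagp p) [B i]) \<le> T * shat i" using le[OF im] by simp
    qed
    show "Ld p (\<lambda>i. [B i]) i \<le> oc * shat i + real (length [B i] - 1) * muM p m (\<lambda>i. [B i])" if "i < m" for i
      using le[OF that] unfolding Ld_def by simp
    show "length [B i] \<le> 1 \<or> (\<forall>X\<in>set [B i]. 2 \<le> card X \<longrightarrow> (\<forall>Z\<in>set [B i]. bagp p X \<le> 2 * bagp p Z))" for i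
      by simp
  qed
qed

lemma main_bound:
  fixes \<alpha> \<delta> :: real and n m :: nat and p s shat :: "nat \<Rightarrow> real" and bags :: "nat set list" and g :: "nat \<Rightarrow> nat"
  assumes a0: "0 < \<alpha>" and a1: "\<alpha> < 1" and m1: "1 \<le> m" and pnn: "\<forall>j<n. 0 \<le> p j"
    and spos: "\<forall>i<m. 0 < s i" and sh: "\<forall>i<m. 0 \<le> shat i"
    and ipr: "ipr_output n m p shat \<alpha> \<delta> 4 bags" and sp: "sched_ptas p s m \<delta> bags g"
    and d0: "0 < \<delta>"
  shows "makespan (bag_sizes p bags) s (length bags) m g \<le> (1 + \<delta>) * ((2 + 2 / \<alpha>) * opt p s n m) \<and>
    (\<forall>\<eta>. pred_error_le m s shat \<eta> \<longrightarrow>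
       makespan (bag_sizes p bags) s (length bags) m g \<le> (1 + \<delta>) * (1 + \<delta>) * (1 + \<alpha>) * \<eta>\<^sup>2 * opt p s n m)"
proof -
  obtain B R where pp: "ptas_partition n m p shat \<delta> B"
    and lp: "ipr_loop p shat m 4 ((1 + \<alpha>) * optC m p shat B) (\<lambda>i. [B i]) R"
    and bags_eq: "bags = allbags m R"
    using ipr unfolding ipr_output_def by blast
  define oc where "oc = optC m p shat B"
  define T where "T = (1 + \<alpha>) * oc"
  interpret invctx n m p shat oc T by unfold_locales (use m1 pnn in auto)
  have I0: "Inv n m p shat oc T (\<lambda>i. [B i])"
    by (rule init_inv[OF m1 pnn sh pp a0 oc_def T_def])
  have IR: "Inv n m p shat oc T R \<and>
    (\<not> continue_cond p 4 m R \<or> (\<exists>M'. continue_cond p 4 m R \<and> lpt_rebalance p m R M' \<and> \<not> fits p shat m T M'))"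
    using loop[OF lp[folded oc_def, folded T_def] I0] .
  then have I: "Inv n m p shat oc T R" by blast
  have lenb: "length bags = m" using I unfolding Inv_def bags_eq by blast
  define \<mu> where "\<mu> = muM p m R"
  have mu0: "0 \<le> \<mu>" unfolding \<mu>_def using mu_nn[OF I] .
  have multi: "\<forall>B\<in>set (allbags m R). 2 \<le> card B \<longrightarrow> bagp p B \<le> (2 + 2 / \<alpha>) * \<mu>"
    unfolding \<mu>_def using final_multi[OF I _ T_def a0 a1] IR by blast
  have Os0: "0 \<le> opt p s n m" by (rule opt_nonneg[OF m1 spos pnn])
  have c2: "2 \<le> 2 + 2 / \<alpha>" using a0 by simp
  have ms: "makespan (bag_sizes p bags) s (length bags) m g \<le> (1 + \<delta>) * opt (bag_sizes p bags) s m m"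
    using makespan_le[OF sp spos m1] lenb by simp
  have rob: "opt (bag_sizes p bags) s m m \<le> (2 + 2 / \<alpha>) * opt p s n m"
  proof (rule sched_bags[OF lenb m1 spos pnn _ _ mu0 _ c2])
    show "\<forall>j. card {k. k < m \<and> j \<in> bags ! k} = (if j < n then 1 else 0)"
      using I lenb unfolding Inv_def bags_eq by (simp add: cnt_card)
    show "\<forall>k<m. \<mu> \<le> bagp p (bags ! k)"
      using mu_le[OF I] lenb unfolding \<mu>_def bags_eq by (metis nth_mem)
    show "\<forall>k<m. 2 \<le> card (bags ! k) \<longrightarrow> bagp p (bags ! k) \<le> (2 + 2 / \<alpha>) * \<mu>"
      using multi lenb unfolding bags_eq by (metis nth_mem)
  qed
  have part1: "makespan (bag_sizes p bags) s (length bags) m g \<le> (1 + \<delta>) * ((2 + 2 / \<alpha>) * opt p s n m)"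
    using ms rob d0 by (meson less_eq_real_def mult_left_mono order_trans add_pos_pos zero_less_one)
  have part2: "makespan (bag_sizes p bags) s (length bags) m g \<le> (1 + \<delta>) * (1 + \<delta>) * (1 + \<alpha>) * \<eta>\<^sup>2 * opt p s n m"
    if pe: "pred_error_le m s shat \<eta>" for \<eta>
  proof -
    define c0 where "c0 = Max (s ` {..<m}) / Max (shat ` {..<m})"
    have pe': "\<forall>i<m. shat i > 0 \<and> max (c0 * shat i) (s i) \<le> \<eta> * min (c0 * shat i) (s i)"
      using pe unfolding pred_error_le_def c0_def Let_def by blast
    have m0: "0 < m" using m1 by simp
    have Ms: "Max (s ` {..<m}) > 0"
    proof -
      have "s 0 \<le> Max (s ` {..<m})" by (rule Max_ge) (use m0 in auto)
      moreover have "0 < s 0" using spos m0 by simp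
      ultimately show ?thesis by linarith
    qed
    have Mh: "Max (shat ` {..<m}) > 0"
    proof -
      have "shat 0 \<le> Max (shat ` {..<m})" by (rule Max_ge) (use m0 in auto)
      moreover have "0 < shat 0" using pe' m0 by simp
      ultimately show ?thesis by linarith
    qed
    have c00: "c0 > 0" unfolding c0_def using Ms Mh by simp
    have eta0: "\<eta> > 0"
    proof -
      have "0 < s 0" using spos m0 by simp
      have "0 < c0 * shat 0" using c00 pe' m0 by simp
      then have mn: "0 < min (c0 * shat 0) (s 0)" using \<open>0 < s 0\<close> by simp
      have "0 < max (c0 * shat 0) (s 0)" using \<open>0 < s 0\<close> by simp
      then have "0 < \<eta> * min (c0 * shat 0) (s 0)" using pe' m0 by (meson less_le_trans)
      then show ?thesis using mn by (simp add: zero_less_mult_iff)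
    qed
    have hs1: "c0 * shat i \<le> \<eta> * s i" if "i < m" for i
    proof -
      have "c0 * shat i \<le> max (c0 * shat i) (s i)" by simp
      also have "\<dots> \<le> \<eta> * min (c0 * shat i) (s i)" using pe' that by blast
      also have "\<dots> \<le> \<eta> * s i" using eta0 by (intro mult_left_mono) auto
      finally show ?thesis .
    qed
    have hs2: "s i \<le> \<eta> * (c0 * shat i)" if "i < m" for i
    proof -
      have "s i \<le> max (c0 * shat i) (s i)" by simp
      also have "\<dots> \<le> \<eta> * min (c0 * shat i) (s i)" using pe' that by blast
      also have "\<dots> \<le> \<eta> * (c0 * shat i)" using eta0 by (intro mult_left_mono) auto
      finally show ?thesis .
    qed
    have shpos: "\<forall>i<m. 0 < shat i" using pe' by blast
    have cap: "\<forall>i<m. bagp p (B i) \<le> (1 + \<delta>) * opt p shat n m * shat i"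
      using pp unfolding ptas_partition_def by blast
    have ocb: "oc \<le> (1 + \<delta>) * opt p shat n m"
      unfolding oc_def optC_def
    proof (rule Max.boundedI)
      show "finite ((\<lambda>i. bagp p (B i) / shat i) ` {..<m})" by simp
      show "(\<lambda>i. bagp p (B i) / shat i) ` {..<m} \<noteq> {}" using m0 by auto
      fix a assume "a \<in> (\<lambda>i. bagp p (B i) / shat i) ` {..<m}"
      then obtain i where i: "i < m" "a = bagp p (B i) / shat i" by auto
      then show "a \<le> (1 + \<delta>) * opt p shat n m" using cap shpos by (simp add: pos_divide_le_eq)
    qed
    have Oh: "opt p shat n m / (c0 * \<eta>) \<le> opt p s n m"
    proof (rule opt_ge[OF m1 spos pnn])
      fix T' f assume T'0: "0 \<le> T'" and fe: "feasible_within p s n m f T'"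
      have "feasible_within p shat n m f (T' * \<eta> * c0)"
        unfolding feasible_within_def
      proof (intro conjI allI impI)
        show "\<And>j. j < n \<Longrightarrow> f j < m" using fe unfolding feasible_within_def by blast
        fix i assume i: "i < m"
        have "load p n f i \<le> T' * s i" using fe i unfolding feasible_within_def by blast
        also have "\<dots> \<le> T' * (\<eta> * (c0 * shat i))" using hs2[OF i] T'0 by (intro mult_left_mono) auto
        finally show "load p n f i \<le> T' * \<eta> * c0 * shat i" by (simp add: algebra_simps)
      qed
      then have "opt p shat n m \<le> T' * \<eta> * c0" by (rule opt_le[rotated]) (use T'0 eta0 c00 in auto)
      then show "opt p shat n m / (c0 * \<eta>) \<le> T'" using eta0 c00 by (simp add: divide_le_eq algebra_simps)
    qed
    then have Oh': "opt p shat n m \<le> c0 * \<eta> * opt p s n m" using eta0 c00 by (simp add: divide_le_eq algebra_simps)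
    obtain g0 where g01: "\<forall>k<length (allbags m R). g0 k < m"
      and g02: "\<forall>i<m. sum (\<lambda>k. bagp p (allbags m R ! k)) {k. k < length (allbags m R) \<and> g0 k = i} = sum_list (map (bagp p) (R i))"
      using concat_assign[where f = "bagp p" and m = m and M = R] by blast
    have fitsR: "\<forall>i<m. sum_list (map (bagp p) (R i)) \<le> T * shat i" using I unfolding Inv_def fits_def by blast
    have oc0: "0 \<le> oc"
    proof -
      have "0 \<le> Ld p R 0" using Ld_nn[OF I] m0 by simp
      moreover have "R 0 \<noteq> [] \<longrightarrow> True" by simp
      have "bagp p (B 0) / shat 0 \<le> oc" unfolding oc_def optC_def by (rule Max_ge) (use m0 in auto)
      moreover have "0 \<le> bagp p (B 0)"
      proof (rule bagp_nonneg)
        have "B 0 \<subseteq> {..<n}" using pp m0 unfolding ptas_partition_def by blast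
        then show "\<forall>y\<in>B 0. 0 \<le> p y" using pnn by blast
      qed
      ultimately show ?thesis using shpos m0 by (smt (verit) divide_nonneg_pos)
    qed
    have T0: "0 \<le> T" unfolding T_def using a0 oc0 by simp
    have ob: "opt (bag_sizes p bags) s m m \<le> T * \<eta> / c0"
    proof (rule opt_le)
      show "0 \<le> T * \<eta> / c0" using T0 eta0 c00 by simp
      show "feasible_within (bag_sizes p bags) s m m g0 (T * \<eta> / c0)"
        unfolding feasible_within_def
      proof (intro conjI allI impI)
        show "\<And>k. k < m \<Longrightarrow> g0 k < m" using g01 lenb bags_eq by simp
        fix i assume i: "i < m"
        have "load (bag_sizes p bags) m g0 i = sum_list (map (bagp p) (R i))"
          using g02 i lenb unfolding load_def bag_sizes_def bags_eq by simp
        also have "\<dots> \<le> T * shat i" using fitsR i by blast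
        also have "\<dots> \<le> T * (\<eta> * s i / c0)"
        proof -
          have "shat i \<le> \<eta> * s i / c0" using hs1[OF i] c00 by (simp add: pos_le_divide_eq mult.commute)
          then show ?thesis using T0 by (intro mult_left_mono) auto
        qed
        finally show "load (bag_sizes p bags) m g0 i \<le> T * \<eta> / c0 * s i" by (simp add: algebra_simps)
      qed
    qed
    have Tb: "T \<le> (1 + \<alpha>) * (1 + \<delta>) * (c0 * \<eta> * opt p s n m)"
    proof -
      have "T \<le> (1 + \<alpha>) * ((1 + \<delta>) * opt p shat n m)" unfolding T_def using ocb a0 by (intro mult_left_mono) auto
      also have "\<dots> \<le> (1 + \<alpha>) * ((1 + \<delta>) * (c0 * \<eta> * opt p s n m))"
        using Oh' a0 d0 by (intro mult_left_mono) auto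
      finally show ?thesis by (simp add: algebra_simps)
    qed
    have "opt (bag_sizes p bags) s m m \<le> (1 + \<alpha>) * (1 + \<delta>) * (c0 * \<eta> * opt p s n m) * \<eta> / c0"
    proof -
      have "T * \<eta> / c0 \<le> (1 + \<alpha>) * (1 + \<delta>) * (c0 * \<eta> * opt p s n m) * \<eta> / c0"
        using Tb eta0 c00 by (intro divide_right_mono mult_right_mono) auto
      then show ?thesis using ob by linarith
    qed
    also have "\<dots> = (1 + \<alpha>) * (1 + \<delta>) * \<eta>\<^sup>2 * opt p s n m" using c00 by (simp add: power2_eq_square field_simps)
    finally have obb: "opt (bag_sizes p bags) s m m \<le> (1 + \<alpha>) * (1 + \<delta>) * \<eta>\<^sup>2 * opt p s n m" .
    have "makespan (bag_sizes p bags) s (length bags) m g \<le> (1 + \<delta>) * ((1 + \<alpha>) * (1 + \<delta>) * \<eta>\<^sup>2 * opt p s n m)"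
      using ms obb d0 by (meson less_eq_real_def mult_left_mono order_trans add_pos_pos zero_less_one)
    then show ?thesis by (simp add: algebra_simps)
  qed
  show ?thesis using part1 part2 by blast
qed

theorem theorem2:
  fixes \<epsilon> :: real
  assumes "0 < \<epsilon>" and "\<epsilon> < 1"
  shows "\<exists>\<delta>1 \<delta>2. 0 < \<delta>1 \<and> \<delta>1 < 1 \<and> 0 < \<delta>2 \<and> \<delta>2 < 1 \<and>
    (\<forall>(\<alpha>::real) (n::nat) (m::nat) (p::nat \<Rightarrow> real) (s::nat \<Rightarrow> real) (shat::nat \<Rightarrow> real)
        (bags::nat set list) (g::nat \<Rightarrow> nat).
       0 < \<alpha> \<and> \<alpha> < 1 \<and> 1 \<le> m \<and>
       (\<forall>j<n. 0 \<le> p j) \<and> (\<forall>i<m. 0 < s i) \<and> (\<forall>i<m. 0 \<le> shat i) \<and> (\<exists>i<m. 0 < shat i) \<and>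
       (\<forall>i j. i \<le> j \<longrightarrow> j < m \<longrightarrow> shat j \<le> shat i) \<and>
       ipr_output n m p shat \<alpha> \<delta>1 4 bags \<and>
       sched_ptas p s m \<delta>2 bags g
       \<longrightarrow>
       makespan (bag_sizes p bags) s (length bags) m g
          \<le> (1 + \<epsilon>) * (2 + 2 / \<alpha>) * opt p s n m \<and>
       (\<forall>\<eta>. pred_error_le m s shat \<eta> \<longrightarrow>
          makespan (bag_sizes p bags) s (length bags) m g
            \<le> \<eta>\<^sup>2 * (1 + \<epsilon>) * (1 + \<alpha>) * opt p s n m))"
proof -
  define \<delta> where "\<delta> = \<epsilon> / 3"
  have d0: "0 < \<delta>" and d1: "\<delta> < 1" using assms unfolding \<delta>_def by auto
  have ee: "\<delta> * \<delta> \<le> \<delta> * 1" using d0 d1 by (intro mult_left_mono) auto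
  have "(1 + \<delta>) * (1 + \<delta>) = 1 + 2 * \<delta> + \<delta> * \<delta>" by (simp add: algebra_simps)
  also have "\<dots> \<le> 1 + 3 * \<delta>" using ee by simp
  also have "\<dots> = 1 + \<epsilon>" unfolding \<delta>_def by simp
  finally have dd: "(1 + \<delta>) * (1 + \<delta>) \<le> 1 + \<epsilon>" .
  have de: "1 + \<delta> \<le> 1 + \<epsilon>" using assms unfolding \<delta>_def by simp
  have "\<forall>(\<alpha>::real) (n::nat) (m::nat) (p::nat \<Rightarrow> real) (s::nat \<Rightarrow> real) (shat::nat \<Rightarrow> real)
        (bags::nat set list) (g::nat \<Rightarrow> nat).
       0 < \<alpha> \<and> \<alpha> < 1 \<and> 1 \<le> m \<and>
       (\<forall>j<n. 0 \<le> p j) \<and> (\<forall>i<m. 0 < s i) \<and> (\<forall>i<m. 0 \<le> shat i) \<and> (\<exists>i<m. 0 < shat i) \<and>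
       (\<forall>i j. i \<le> j \<longrightarrow> j < m \<longrightarrow> shat j \<le> shat i) \<and>
       ipr_output n m p shat \<alpha> \<delta> 4 bags \<and>
       sched_ptas p s m \<delta> bags g
       \<longrightarrow>
       makespan (bag_sizes p bags) s (length bags) m g
          \<le> (1 + \<epsilon>) * (2 + 2 / \<alpha>) * opt p s n m \<and>
       (\<forall>\<eta>. pred_error_le m s shat \<eta> \<longrightarrow>
          makespan (bag_sizes p bags) s (length bags) m g
            \<le> \<eta>\<^sup>2 * (1 + \<epsilon>) * (1 + \<alpha>) * opt p s n m)"
  proof (intro allI impI)
    fix \<alpha> :: real and n m :: nat and p s shat :: "nat \<Rightarrow> real" and bags :: "nat set list" and g :: "nat \<Rightarrow> nat"
    assume H: "0 < \<alpha> \<and> \<alpha> < 1 \<and> 1 \<le> m \<and>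
       (\<forall>j<n. 0 \<le> p j) \<and> (\<forall>i<m. 0 < s i) \<and> (\<forall>i<m. 0 \<le> shat i) \<and> (\<exists>i<m. 0 < shat i) \<and>
       (\<forall>i j. i \<le> j \<longrightarrow> j < m \<longrightarrow> shat j \<le> shat i) \<and>
       ipr_output n m p shat \<alpha> \<delta> 4 bags \<and>
       sched_ptas p s m \<delta> bags g"
    have a0: "0 < \<alpha>" and a1: "\<alpha> < 1" and m1: "1 \<le> m" and pnn: "\<forall>j<n. 0 \<le> p j"
      and spos: "\<forall>i<m. 0 < s i" and sh: "\<forall>i<m. 0 \<le> shat i"
      and ipr: "ipr_output n m p shat \<alpha> \<delta> 4 bags" and sp: "sched_ptas p s m \<delta> bags g"
      using H by blast+
    have MB: "makespan (bag_sizes p bags) s (length bags) m g \<le> (1 + \<delta>) * ((2 + 2 / \<alpha>) * opt p s n m) \<and>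
      (\<forall>\<eta>. pred_error_le m s shat \<eta> \<longrightarrow>
       makespan (bag_sizes p bags) s (length bags) m g \<le> (1 + \<delta>) * (1 + \<delta>) * (1 + \<alpha>) * \<eta>\<^sup>2 * opt p s n m)"
      by (rule main_bound[OF a0 a1 m1 pnn spos sh ipr sp d0])
    have Os0: "0 \<le> opt p s n m" by (rule opt_nonneg[OF m1 spos pnn])
    have c0: "0 \<le> (2 + 2 / \<alpha>) * opt p s n m" using a0 Os0 by simp
    have r1: "makespan (bag_sizes p bags) s (length bags) m g \<le> (1 + \<epsilon>) * (2 + 2 / \<alpha>) * opt p s n m"
    proof -
      have "(1 + \<delta>) * ((2 + 2 / \<alpha>) * opt p s n m) \<le> (1 + \<epsilon>) * ((2 + 2 / \<alpha>) * opt p s n m)"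
        using de c0 by (intro mult_right_mono) auto
      then show ?thesis using MB by (simp add: mult.assoc)
    qed
    have r2: "makespan (bag_sizes p bags) s (length bags) m g \<le> \<eta>\<^sup>2 * (1 + \<epsilon>) * (1 + \<alpha>) * opt p s n m"
      if "pred_error_le m s shat \<eta>" for \<eta>
    proof -
      have X0: "0 \<le> (1 + \<alpha>) * \<eta>\<^sup>2 * opt p s n m" using a0 Os0 by simp
      have "(1 + \<delta>) * (1 + \<delta>) * ((1 + \<alpha>) * \<eta>\<^sup>2 * opt p s n m) \<le> (1 + \<epsilon>) * ((1 + \<alpha>) * \<eta>\<^sup>2 * opt p s n m)"
        using dd X0 by (intro mult_right_mono) auto
      moreover have "makespan (bag_sizes p bags) s (length bags) m g \<le> (1 + \<delta>) * (1 + \<delta>) * ((1 + \<alpha>) * \<eta>\<^sup>2 * opt p s n m)"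
        using MB that by (simp add: mult.assoc)
      ultimately show ?thesis by (simp add: algebra_simps)
    qed
    show "makespan (bag_sizes p bags) s (length bags) m g \<le> (1 + \<epsilon>) * (2 + 2 / \<alpha>) * opt p s n m \<and>
       (\<forall>\<eta>. pred_error_le m s shat \<eta> \<longrightarrow>
          makespan (bag_sizes p bags) s (length bags) m g \<le> \<eta>\<^sup>2 * (1 + \<epsilon>) * (1 + \<alpha>) * opt p s n m)"
      using r1 r2 by blast
  qed
  then show ?thesis using d0 d1 by blast
qed

end
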